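(* Let $N\in\{12,24,60\}$ and let $\mathcal{R}\subset SO(3)$ be the rotation group of a Platonic polyhedron, with $|\mathcal{R}|=N$ and identity $I$. Let $Q>0$ and define, on the open set $\Omega=\mathbb{R}^3\setminus\Gamma$ where $\Gamma=\bigcup_{R\in\mathcal{R}\setminus\{I\}}\{x\in\mathbb{R}^3: Rx=x\}$ (the union of the rotation axes), $$V(x)=-\frac12\sum_{R\in\mathcal{R}\setminus\{I\}}\frac{1}{|(R-I)x|}+\frac{Q}{|x|}.$$ Fix $T>0$, an integer $M\ge 1$, a rotation $R_0\in SO(3)$, and set $\tau=T/M$. Let $u_0\in C^2([0,\tau],\Omega)$ be a solution of the Euler–Lagrange equation $\ddot u_0=\nabla V(u_0)$ of the Lagrangian $L(x,\dot x)=\frac12|\dot x|^2+V(x)$, and let $H(t)=\nabla^2V(u_0(t))$ (the Hessian of $V$ along $u_0$). Consider the quadratic functional (second variation) $$\delta^2\bar{\mathcal{A}}(v)=\int_0^{\tau}\big(|\dot v(t)|^2+v(t)\cdot H(t)v(t)\big)\,dt$$ on the class of functions $v\in C^1([0,\tau],\mathbb{R}^3)$ satisfying $v(\tau)=R_0v(0)$. Let $(Y_0,Z_0)$ and $(Y_\tau,Z_\tau)$ be the solutions of the matrix Jacobi system $\dot Y=Z$, $\dot Z=H(t)Y$ (with $Y,Z:[0,\tau]\to\mathbb{R}^{3\times3}$) determined by $Y_0(0)=0,\ Z_0(0)=\mathrm{Id}$ and by $Y_\tau(\tau)=0,\ Z_\tau(\tau)=-\mathrm{Id}$, respectively, and put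 $W_0=Z_0Y_0^{-1}$, $W_\tau=Z_\tau Y_\tau^{-1}$ wherever the inverses exist. Then $\delta^2\bar{\mathcal{A}}(v)>0$ for every nonzero admissible $v$ if and only if both of the following hold: (i) (strengthened Jacobi condition) $\det Y_0(t)\neq 0$ for all $t\in(0,\tau]$; (ii) the $3\times3$ matrix $$-W_{\tau}(0)-Y_0^{-1}(\tau)R_0-R_0^{T}\big(Y_0^{-1}(\tau)\big)^{T}+R_0^{T}W_0(\tau)R_0$$ is positive definite, i.e. $\beta^T(\cdot)\beta>0$ for all nonzero $\beta\in\mathbb{R}^3$.
   Context: This is the criterion for the restricted action functional $\bar{\mathcal{A}}(u)=\int_0^{T/M}\big(\frac12|\dot u|^2+V(u)\big)dt$ of one "generating" electron (unit charge $-1$, unit mass, unit Coulomb constant, nucleus of charge $Q$ fixed at the origin, the other $N-1$ electrons at positions $Ru$, $R\in\mathcal{R}\setminus\{I\}$), defined on paths $u:[0,T/M]\to\mathbb{R}^3$ with $u(T/M)=R_0u(0)$. A point $c\in(0,\tau]$ is called conjugate to $0$ if some solution $(y,z)$ of $\dot y=z$, $\dot z=H(t)y$ with $y(0)=0$, $y\not\equiv0$, has $y(c)=0$; condition (i) is equivalent to the absence of conjugate points in $(0,\tau]$. The strengthened Legendre condition holds automatically since $\partial^2L/\partial\dot x^2=\mathrm{Id}$. *)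

theory Defs
  imports "HOL-Analysis.Analysis"
begin

definition SO3 :: "(real^3^3) set" where
  "SO3 = {A. orthogonal_matrix A \<and> det A = 1}"

definition golden :: real where "golden = (1 + sqrt 5) / 2"

definition signs :: "real set" where "signs = {-1, 1}"

definition tetrahedron_vertices :: "(real^3) set" where
  "tetrahedron_vertices =
     {vector [1,1,1], vector [1,-1,-1], vector [-1,1,-1], vector [-1,-1,1]}"

definition cube_vertices :: "(real^3) set" where
  "cube_vertices = {vector [a,b,c] | a b c. a \<in> signs \<and> b \<in> signs \<and> c \<in> signs}"

definition octahedron_vertices :: "(real^3) set" where
  "octahedron_vertices =
     {vector [a,0,0] | a. a \<in> signs} \<union> {vector [0,a,0] | a. a \<in> signs} \<union>
     {vector [0,0,a] | a. a \<in> signs}"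

definition icosahedron_vertices :: "(real^3) set" where
  "icosahedron_vertices =
     {vector [0, a, b * golden] | a b. a \<in> signs \<and> b \<in> signs} \<union>
     {vector [a, b * golden, 0] | a b. a \<in> signs \<and> b \<in> signs} \<union>
     {vector [b * golden, 0, a] | a b. a \<in> signs \<and> b \<in> signs}"

definition dodecahedron_vertices :: "(real^3) set" where
  "dodecahedron_vertices = cube_vertices \<union>
     {vector [0, a / golden, b * golden] | a b. a \<in> signs \<and> b \<in> signs} \<union>
     {vector [a / golden, b * golden, 0] | a b. a \<in> signs \<and> b \<in> signs} \<union>
     {vector [b * golden, 0, a / golden] | a b. a \<in> signs \<and> b \<in> signs}"

definition platonic_standard :: "(real^3) set set" where
  "platonic_standard = {tetrahedron_vertices, cube_vertices, octahedron_vertices,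
                        dodecahedron_vertices, icosahedron_vertices}"

definition platonic_vertex_set :: "(real^3) set \<Rightarrow> bool" where
  "platonic_vertex_set P \<longleftrightarrow>
     (\<exists>P0 \<in> platonic_standard. \<exists>U \<in> SO3. \<exists>c::real. c > 0 \<and>
        P = (\<lambda>v. c *\<^sub>R (U *v v)) ` P0)"

text \<open>Rotation group of a polyhedron: the rotations mapping it (equivalently its
  vertex set) onto itself.\<close>

definition rotation_group_of :: "(real^3) set \<Rightarrow> (real^3^3) set" where
  "rotation_group_of P = {A \<in> SO3. (\<lambda>v. A *v v) ` P = P}"

definition platonic_rotation_group :: "(real^3^3) set \<Rightarrow> bool" where
  "platonic_rotation_group G \<longleftrightarrow>
     (\<exists>P. platonic_vertex_set P \<and> G = rotation_group_of P)"

definition rot_axes :: "(real^3^3) set \<Rightarrow> (real^3) set" where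
  "rot_axes G = (\<Union>R \<in> G - {mat 1}. {x. R *v x = x})"

definition potential :: "(real^3^3) set \<Rightarrow> real \<Rightarrow> real^3 \<Rightarrow> real" where
  "potential G Q x =
     - (1/2) * (\<Sum>R \<in> G - {mat 1}. 1 / norm ((R - mat 1) *v x)) + Q / norm x"

definition pdiff :: "3 \<Rightarrow> (real^3 \<Rightarrow> real) \<Rightarrow> real^3 \<Rightarrow> real" where
  "pdiff i f x = deriv (\<lambda>s. f (x + s *\<^sub>R axis i 1)) 0"

definition grad :: "(real^3 \<Rightarrow> real) \<Rightarrow> real^3 \<Rightarrow> real^3" where
  "grad f x = (\<chi> i. pdiff i f x)"

definition hessian :: "(real^3 \<Rightarrow> real) \<Rightarrow> real^3 \<Rightarrow> real^3^3" where
  "hessian f x = (\<chi> i j. pdiff i (pdiff j f) x)"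

definition pos_def :: "real^3^3 \<Rightarrow> bool" where
  "pos_def A \<longleftrightarrow> (\<forall>\<beta>. \<beta> \<noteq> 0 \<longrightarrow> \<beta> \<bullet> (A *v \<beta>) > 0)"

end

theory Submission
  imports Defs
begin


lemma d_norm_A:
  fixes A :: "real^3^3"
  assumes "A *v x \<noteq> 0"
  shows "((\<lambda>y. norm (A *v y)) has_derivative (\<lambda>h. ((A *v x) \<bullet> (A *v h)) / norm (A *v x))) (at x)"
proof -
  have lin: "((\<lambda>y. A *v y) has_derivative (\<lambda>h. A *v h)) (at x)"
    by (simp add: bounded_linear_imp_has_derivative)
  have "((\<lambda>y. norm (A *v y)) has_derivative (\<lambda>h. sgn (A *v x) \<bullet> (A *v h))) (at x)"
    using has_derivative_compose[OF lin has_derivative_norm[OF assms]] by (simp add: o_def inner_commute)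
  then show ?thesis by (simp add: sgn_div_norm divide_inverse mult.commute)
qed

lemma d_gA:
  fixes A :: "real^3^3"
  assumes "A *v x \<noteq> 0"
  shows "((\<lambda>y. 1 / norm (A *v y)) has_derivative
     (\<lambda>h. - ((A *v x) \<bullet> (A *v h)) / norm (A *v x) ^ 3)) (at x)"
proof -
  have n: "norm (A *v x) \<noteq> 0" using assms by simp
  show ?thesis
    using d_norm_A[OF assms] n
    by (auto intro!: derivative_eq_intros simp: field_simps power3_eq_cube)
qed

lemma d_pA:
  fixes A :: "real^3^3"
  assumes "A *v x \<noteq> 0"
  shows "((\<lambda>y. - ((A *v y) \<bullet> b) / norm (A *v y) ^ 3) has_derivative
     (\<lambda>h. - ((A *v h) \<bullet> b) / norm (A *v x) ^ 3
          + 3 * ((A *v x) \<bullet> b) * ((A *v x) \<bullet> (A *v h)) / norm (A *v x) ^ 5)) (at x)"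
proof -
  have n: "norm (A *v x) \<noteq> 0" using assms by simp
  have lin: "((\<lambda>y. A *v y) has_derivative (\<lambda>h. A *v h)) (at x)"
    by (simp add: bounded_linear_imp_has_derivative)
  show ?thesis
    using d_norm_A[OF assms] n lin
    by (auto intro!: derivative_eq_intros simp: field_simps power3_eq_cube eval_nat_numeral)
qed

lemma pdiff_from_deriv:
  assumes "(f has_derivative D) (at x)"
  shows "pdiff i f x = D (axis i 1)"
proof -
  have l: "((\<lambda>s::real. x + s *\<^sub>R axis i 1) has_derivative (\<lambda>s. s *\<^sub>R axis i 1)) (at 0)"
    by (auto intro!: derivative_eq_intros)
  have "((\<lambda>s. f (x + s *\<^sub>R axis i 1)) has_derivative (\<lambda>s. D (s *\<^sub>R axis i 1))) (at 0)"
    using has_derivative_compose[OF l, of f D] assms by (simp add: o_def)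
  moreover have "bounded_linear D" using assms has_derivative_bounded_linear by blast
  ultimately have "((\<lambda>s. f (x + s *\<^sub>R axis i 1)) has_derivative (\<lambda>s. s * D (axis i 1))) (at 0)"
    by (simp add: linear_simps)
  then have "((\<lambda>s. f (x + s *\<^sub>R axis i 1)) has_field_derivative D (axis i 1)) (at 0)"
    unfolding has_field_derivative_def by (rule has_derivative_eq_rhs) (auto simp: mult.commute)
  then show ?thesis unfolding pdiff_def by (rule DERIV_imp_deriv)
qed

definition pA :: "real^3^3 \<Rightarrow> 3 \<Rightarrow> real^3 \<Rightarrow> real" where
  "pA A j y = - ((A *v y) \<bullet> (A *v axis j 1)) / norm (A *v y) ^ 3"

definition sA :: "real^3^3 \<Rightarrow> 3 \<Rightarrow> 3 \<Rightarrow> real^3 \<Rightarrow> real" where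
  "sA A i j x = - ((A *v axis i 1) \<bullet> (A *v axis j 1)) / norm (A *v x) ^ 3
          + 3 * ((A *v x) \<bullet> (A *v axis j 1)) * ((A *v x) \<bullet> (A *v axis i 1)) / norm (A *v x) ^ 5"

definition Omega :: "(real^3^3) set \<Rightarrow> (real^3) set" where
  "Omega G = {x. x \<noteq> 0 \<and> (\<forall>R \<in> G - {mat 1}. (R - mat 1) *v x \<noteq> 0)}"

definition Kmat :: "(real^3^3) set \<Rightarrow> real \<Rightarrow> real^3 \<Rightarrow> real^3^3" where
  "Kmat G Q x = (\<chi> i j. - (1/2) * (\<Sum>R \<in> G - {mat 1}. sA (R - mat 1) i j x) + Q * sA (mat 1) i j x)"

lemma potential_alt: "potential G Q y = - (1/2) * (\<Sum>R \<in> G - {mat 1}. 1 / norm ((R - mat 1) *v y)) + Q * (1 / norm (mat 1 *v y))"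
  by (simp add: potential_def)

lemma open_Omega: assumes "finite G" shows "open (Omega G)"
proof -
  have "Omega G = {x. x \<noteq> 0} \<inter> (\<Inter>R \<in> G - {mat 1}. {x. (R - mat 1) *v x \<noteq> 0})"
    by (auto simp: Omega_def)
  moreover have "open {x::real^3. x \<noteq> 0}" by (simp add: open_Collect_neq continuous_on_const continuous_on_id)
  moreover have "\<And>R. open {x::real^3. (R - mat 1) *v x \<noteq> 0}"
    by (rule open_Collect_neq) (auto intro!: continuous_intros)
  ultimately show ?thesis using assms by (auto intro!: open_Int open_INT)
qed

lemma d_pot:
  assumes "finite G" "x \<in> Omega G"
  shows "(potential G Q has_derivative
     (\<lambda>h. - (1/2) * (\<Sum>R \<in> G - {mat 1}. - (((R - mat 1) *v x) \<bullet> ((R - mat 1) *v h)) / norm ((R - mat 1) *v x) ^ 3)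
          + Q * (- ((mat 1 *v x) \<bullet> (mat 1 *v h)) / norm (mat 1 *v x) ^ 3))) (at x)"
proof -
  have x0: "mat 1 *v x \<noteq> 0" using assms by (simp add: Omega_def)
  have xR: "\<And>R. R \<in> G - {mat 1} \<Longrightarrow> (R - mat 1) *v x \<noteq> 0" using assms by (simp add: Omega_def)
  show ?thesis unfolding potential_alt[abs_def]
    by (intro has_derivative_add has_derivative_mult_right has_derivative_sum d_gA xR x0)
qed

lemma pdiff_pot:
  assumes "finite G" "x \<in> Omega G"
  shows "pdiff j (potential G Q) x = - (1/2) * (\<Sum>R \<in> G - {mat 1}. pA (R - mat 1) j x) + Q * pA (mat 1) j x"
  using pdiff_from_deriv[OF d_pot[OF assms]] by (simp add: pA_def)

lemma d_pdiff_pot: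
  assumes "finite G" "x \<in> Omega G"
  shows "((pdiff j (potential G Q)) has_derivative
     (\<lambda>h. - (1/2) * (\<Sum>R \<in> G - {mat 1}. - (((R - mat 1) *v h) \<bullet> ((R - mat 1) *v axis j 1)) / norm ((R - mat 1) *v x) ^ 3
          + 3 * (((R - mat 1) *v x) \<bullet> ((R - mat 1) *v axis j 1)) * (((R - mat 1) *v x) \<bullet> ((R - mat 1) *v h)) / norm ((R - mat 1) *v x) ^ 5)
        + Q * (- ((mat 1 *v h) \<bullet> (mat 1 *v axis j 1)) / norm (mat 1 *v x) ^ 3
          + 3 * ((mat 1 *v x) \<bullet> (mat 1 *v axis j 1)) * ((mat 1 *v x) \<bullet> (mat 1 *v h)) / norm (mat 1 *v x) ^ 5))) (at x)"
proof -
  have x0: "mat 1 *v x \<noteq> 0" using assms by (simp add: Omega_def)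
  have xR: "\<And>R. R \<in> G - {mat 1} \<Longrightarrow> (R - mat 1) *v x \<noteq> 0" using assms by (simp add: Omega_def)
  show ?thesis
    apply (rule has_derivative_transform_within_open[where f="\<lambda>y. - (1/2) * (\<Sum>R \<in> G - {mat 1}. pA (R - mat 1) j y) + Q * pA (mat 1) j y", OF _ open_Omega[OF assms(1)] assms(2)])
    unfolding pA_def
     apply (intro has_derivative_add has_derivative_mult_right has_derivative_sum d_pA xR x0)
    by (auto simp: pdiff_pot[OF assms(1)] pA_def)
qed

lemma hessian_pot:
  assumes "finite G" "x \<in> Omega G"
  shows "hessian (potential G Q) x = Kmat G Q x"
  unfolding hessian_def Kmat_def
  by (simp add: pdiff_from_deriv[OF d_pdiff_pot[OF assms]] sA_def)

lemma Kmat_sym: "transpose (Kmat G Q x) = Kmat G Q x"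
  unfolding Kmat_def transpose_def sA_def
  by (rule vec_eq_iff[THEN iffD2]) (simp add: inner_commute mult.commute mult.left_commute)


lemma vd_quot:
  fixes f :: "real \<Rightarrow> 'a::real_normed_vector"
  shows "(f has_vector_derivative f') (at x within S) \<longleftrightarrow>
    ((\<lambda>y. (f y - f x) /\<^sub>R (y - x)) \<longlongrightarrow> f') (at x within S)"
proof -
  have bl: "bounded_linear (\<lambda>h::real. h *\<^sub>R f')" by (rule bounded_linear_scaleR_left)
  have ne: "\<forall>\<^sub>F y in at x within S. y \<noteq> x" by (simp add: eventually_at_filter)
  have eq: "\<forall>\<^sub>F y in at x within S. norm ((1 / norm (y - x)) *\<^sub>R (f y - (f x + (y - x) *\<^sub>R f')))
        = norm ((f y - f x) /\<^sub>R (y - x) - f')"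
  proof (rule eventually_mono[OF ne])
    fix y :: real assume "y \<noteq> x"
    then have yx: "y - x \<noteq> 0" by simp
    have "(1 / (y - x)) *\<^sub>R (f y - (f x + (y - x) *\<^sub>R f')) = (1 / (y - x)) *\<^sub>R ((f y - f x) - (y - x) *\<^sub>R f')"
      by (simp add: algebra_simps)
    also have "\<dots> = (1 / (y - x)) *\<^sub>R (f y - f x) - ((1 / (y - x)) * (y - x)) *\<^sub>R f'"
      by (simp only: scaleR_diff_right scaleR_scaleR)
    also have "\<dots> = (f y - f x) /\<^sub>R (y - x) - f'" using yx by (simp add: divide_inverse)
    finally have "(f y - f x) /\<^sub>R (y - x) - f' = (1 / (y - x)) *\<^sub>R (f y - (f x + (y - x) *\<^sub>R f'))" by simp
    then show "norm ((1 / norm (y - x)) *\<^sub>R (f y - (f x + (y - x) *\<^sub>R f')))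
        = norm ((f y - f x) /\<^sub>R (y - x) - f')"
      by (simp add: abs_div)
  qed
  have "(f has_vector_derivative f') (at x within S) \<longleftrightarrow>
     ((\<lambda>y. (1 / norm (y - x)) *\<^sub>R (f y - (f x + (y - x) *\<^sub>R f'))) \<longlongrightarrow> 0) (at x within S)"
    unfolding has_vector_derivative_def has_derivative_within using bl by blast
  also have "\<dots> \<longleftrightarrow> ((\<lambda>y. norm ((1 / norm (y - x)) *\<^sub>R (f y - (f x + (y - x) *\<^sub>R f')))) \<longlongrightarrow> 0) (at x within S)"
    by (simp only: tendsto_norm_zero_iff)
  also have "\<dots> \<longleftrightarrow> ((\<lambda>y. norm ((f y - f x) /\<^sub>R (y - x) - f')) \<longlongrightarrow> 0) (at x within S)"
    by (rule tendsto_cong[OF eq])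
  also have "\<dots> \<longleftrightarrow> ((\<lambda>y. (f y - f x) /\<^sub>R (y - x)) \<longlongrightarrow> f') (at x within S)"
    by (simp add: tendsto_norm_zero_iff LIM_zero_iff)
  finally show ?thesis .
qed

lemma minv_props:
  fixes A :: "real^'n^'n"
  assumes "det A \<noteq> 0"
  shows "A ** matrix_inv A = mat 1" "matrix_inv A ** A = mat 1"
proof -
  have "invertible A" using assms invertible_det_nz by blast
  then have "\<exists>A'. A ** A' = mat 1 \<and> A' ** A = mat 1" by (simp add: invertible_def)
  then have "A ** matrix_inv A = mat 1 \<and> matrix_inv A ** A = mat 1"
    unfolding matrix_inv_def by (rule someI_ex)
  then show "A ** matrix_inv A = mat 1" "matrix_inv A ** A = mat 1" by auto
qed

lemma minv_mv:
  fixes A :: "real^'n^'n"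
  assumes "det A \<noteq> 0"
  shows "A *v (matrix_inv A *v y) = y" "matrix_inv A *v (A *v y) = y"
  using minv_props[OF assms] by (simp_all add: matrix_vector_mul_assoc)

lemma minv_solve:
  fixes A :: "real^'n^'n"
  assumes "det A \<noteq> 0" "A *v x = z"
  shows "x = matrix_inv A *v z"
  using minv_mv(2)[OF assms(1), of x] assms(2) by simp

lemma minv_transpose:
  fixes A :: "real^'n^'n"
  assumes "det A \<noteq> 0"
  shows "matrix_inv (transpose A) = transpose (matrix_inv A)"
proof -
  have d: "det (transpose A) \<noteq> 0" using assms by (simp add: det_transpose)
  have "transpose A ** transpose (matrix_inv A) = mat 1"
    using minv_props(2)[OF assms] by (metis matrix_transpose_mul transpose_mat)
  then have "matrix_inv (transpose A) ** (transpose A ** transpose (matrix_inv A)) = matrix_inv (transpose A)"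
    by simp
  then show ?thesis using minv_props(2)[OF d] by (simp add: matrix_mul_assoc)
qed

lemma norm_mv_le:
  fixes M :: "real^3^3"
  shows "norm (M *v x) \<le> 9 * norm M * norm x"
proof -
  have "onorm ((*v) M) \<le> real CARD(3) * real CARD(3) * norm M"
    by (rule onorm_le_matrix_component) (rule order_trans[OF component_le_norm_cart Finite_Cartesian_Product.norm_nth_le])
  then have "onorm ((*v) M) \<le> 9 * norm M" by simp
  moreover have "norm (M *v x) \<le> onorm ((*v) M) * norm x"
    by (rule onorm) (simp add: matrix_vector_mul_bounded_linear)
  ultimately show ?thesis by (meson mult_right_mono norm_ge_zero order_trans)
qed

lemma inv_bound:
  fixes A :: "real^3^3"
  assumes "det A \<noteq> 0"
  obtains m where "m > 0" "\<And>B y. norm (B - A) < m \<Longrightarrow> det B \<noteq> 0 \<and> norm (matrix_inv B *v y) \<le> (1/m) * norm y"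
proof -
  define k where "k = 9 * norm (matrix_inv A) + 1"
  have k: "k > 0" unfolding k_def using norm_ge_zero[of "matrix_inv A"] by linarith
  have lowA: "norm x \<le> k * norm (A *v x)" for x
  proof -
    have "norm x = norm (matrix_inv A *v (A *v x))" by (simp add: minv_mv[OF assms])
    also have "\<dots> \<le> 9 * norm (matrix_inv A) * norm (A *v x)" by (rule norm_mv_le)
    also have "\<dots> \<le> k * norm (A *v x)" by (simp add: k_def mult_right_mono)
    finally show ?thesis .
  qed
  define m where "m = 1 / (18 * k)"
  have m: "m > 0" using k by (simp add: m_def)
  show ?thesis
  proof (rule that[OF m])
    fix B :: "real^3^3" and y assume B: "norm (B - A) < m"
    have lowB: "norm x \<le> 2 * k * norm (B *v x)" for x
    proof -
      have "norm ((B - A) *v x) \<le> 9 * norm (B - A) * norm x" by (rule norm_mv_le)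
      also have "\<dots> \<le> 9 * m * norm x" using B by (simp add: mult_right_mono)
      finally have e: "norm ((B - A) *v x) \<le> norm x / (2 * k)" using k by (simp add: m_def field_simps)
      have "A *v x = B *v x - (B - A) *v x" by (simp add: matrix_vector_mult_diff_rdistrib)
      then have "norm (A *v x) \<le> norm (B *v x) + norm ((B - A) *v x)"
        by (metis norm_triangle_ineq4)
      then have "norm x \<le> k * (norm (B *v x) + norm x / (2 * k))"
        using lowA[of x] e k by (meson add_left_mono mult_left_mono less_imp_le order_trans)
      then show ?thesis using k by (simp add: field_simps)
    qed
    have inj: "inj ((*v) B)"
    proof (rule injI)
      fix x z assume "B *v x = B *v z"
      then have "B *v (x - z) = 0" by (simp add: matrix_vector_mult_diff_distrib)
      then show "x = z" using lowB[of "x - z"] by simp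
    qed
    then have dB: "det B \<noteq> 0"
      by (metis det_nz_iff_inj matrix_vector_mul_linear matrix_of_matrix_vector_mul)
    have a: "norm (matrix_inv B *v y) \<le> 2 * k * norm y"
      using lowB[of "matrix_inv B *v y"] minv_mv(1)[OF dB] by simp
    have b: "2 * k * norm y \<le> 18 * k * norm y" using k by (simp add: mult_right_mono)
    have c: "1/m = 18 * k" by (simp add: m_def)
    have "norm (matrix_inv B *v y) \<le> (1/m) * norm y" unfolding c using a b by linarith
    with dB show "det B \<noteq> 0 \<and> norm (matrix_inv B *v y) \<le> (1/m) * norm y" by simp
  qed
qed

lemma bl_mv: "bounded_linear (\<lambda>A::real^'n^'m. A *v p)"
proof -
  have "linear (\<lambda>A::real^'n^'m. A *v p)"
    by (rule linearI) (simp_all add: matrix_vector_mult_add_rdistrib scaleR_matrix_vector_assoc)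
  then show ?thesis by (simp add: linear_conv_bounded_linear)
qed

lemma tendsto_minv:
  fixes Y :: "'b \<Rightarrow> real^3^3"
  assumes Y: "(Y \<longlongrightarrow> A) F" and dA: "det A \<noteq> 0" and f: "(f \<longlongrightarrow> q) F"
  shows "((\<lambda>s. matrix_inv (Y s) *v f s) \<longlongrightarrow> matrix_inv A *v q) F"
proof -
  obtain m where m: "m > 0" and mb: "\<And>B y. norm (B - A) < m \<Longrightarrow> det B \<noteq> 0 \<and> norm (matrix_inv B *v y) \<le> (1/m) * norm y"
    using inv_bound[OF dA] by blast
  define p where "p = matrix_inv A *v q"
  have Ap: "A *v p = q" by (simp add: p_def minv_mv[OF dA])
  have ev: "\<forall>\<^sub>F s in F. norm (Y s - A) < m"
    using Y m by (simp add: tendsto_iff dist_norm)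
  have lim0: "((\<lambda>s. f s - Y s *v p) \<longlongrightarrow> q - A *v p) F"
    by (intro tendsto_intros f bounded_linear.tendsto[OF bl_mv Y])
  then have "((\<lambda>s. f s - Y s *v p) \<longlongrightarrow> 0) F" using Ap by simp
  then have "((\<lambda>s. norm (f s - Y s *v p)) \<longlongrightarrow> 0) F" by (rule tendsto_norm_zero)
  then have lim0': "((\<lambda>s. (1/m) * norm (f s - Y s *v p)) \<longlongrightarrow> 0) F"
    by (rule tendsto_mult_right_zero)
  have "((\<lambda>s. matrix_inv (Y s) *v f s - p) \<longlongrightarrow> 0) F"
  proof (rule Lim_null_comparison[OF _ lim0'])
    show "\<forall>\<^sub>F s in F. norm (matrix_inv (Y s) *v f s - p) \<le> (1/m) * norm (f s - Y s *v p)"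
    proof (rule eventually_mono[OF ev])
      fix s assume a: "norm (Y s - A) < m"
      then have dY: "det (Y s) \<noteq> 0" using mb by blast
      have "matrix_inv (Y s) *v f s - p = matrix_inv (Y s) *v (f s - Y s *v p)"
        by (simp add: matrix_vector_mult_diff_distrib minv_mv[OF dY])
      then show "norm (matrix_inv (Y s) *v f s - p) \<le> (1/m) * norm (f s - Y s *v p)"
        using mb[OF a] by simp
    qed
  qed
  then show ?thesis by (simp add: p_def LIM_zero_iff)
qed


lemma bb_mv: "bounded_bilinear (\<lambda>(A::real^'n^'m) x. A *v x)"
proof -
  have "bilinear (\<lambda>(A::real^'n^'m) x. A *v x)"
    unfolding bilinear_def
    by (auto intro!: linearI simp: matrix_vector_mult_add_rdistrib matrix_vector_right_distrib
        scaleR_matrix_vector_assoc matrix_vector_mult_scaleR)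
  then show ?thesis by (simp add: bilinear_conv_bounded_bilinear)
qed

lemma vd_mv:
  fixes A :: "real \<Rightarrow> real^'n^'m"
  assumes "(A has_vector_derivative A') (at t within S)" "(x has_vector_derivative x') (at t within S)"
  shows "((\<lambda>s. A s *v x s) has_vector_derivative (A t *v x' + A' *v x t)) (at t within S)"
  using bounded_bilinear.has_vector_derivative[OF bb_mv assms] by simp

lemma vd_mvc:
  fixes A :: "real \<Rightarrow> real^'n^'m"
  assumes "(A has_vector_derivative A') (at t within S)"
  shows "((\<lambda>s. A s *v x) has_vector_derivative (A' *v x)) (at t within S)"
  using bounded_linear.has_vector_derivative[OF bl_mv assms] by simp

lemma vd_inner:
  assumes "(f has_vector_derivative f') (at t within S)" "(g has_vector_derivative g') (at t within S)"
  shows "((\<lambda>s. f s \<bullet> g s) has_vector_derivative (f t \<bullet> g' + f' \<bullet> g t)) (at t within S)"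
  using bounded_bilinear.has_vector_derivative[OF bounded_bilinear_inner assms] by simp

locale jsetup =
  fixes \<tau> :: real and H :: "real \<Rightarrow> real^3^3"
  assumes tau: "\<tau> > 0" and Hc: "continuous_on {0..\<tau>} H"
    and Hs: "\<And>t. t \<in> {0..\<tau>} \<Longrightarrow> transpose (H t) = H t"
begin

definition Dv where "Dv f f' \<longleftrightarrow> (\<forall>t\<in>{0..\<tau>}. (f has_vector_derivative f' t) (at t within {0..\<tau>}))"
definition jacf where "jacf y z \<longleftrightarrow> Dv y z \<and> Dv z (\<lambda>t. H t *v y t)"
definition Qi where "Qi a b v v' = integral {a..b} (\<lambda>t. (norm (v' t))\<^sup>2 + v t \<bullet> (H t *v v t))"

lemma Dv_cont: "Dv f f' \<Longrightarrow> continuous_on {0..\<tau>} f"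
  unfolding Dv_def continuous_on_eq_continuous_within
  using has_vector_derivative_continuous by blast

lemma Dv_sub: "Dv f f' \<Longrightarrow> t \<in> {a..b} \<Longrightarrow> {a..b} \<subseteq> {0..\<tau>} \<Longrightarrow>
    (f has_vector_derivative f' t) (at t within {a..b})"
  unfolding Dv_def by (meson has_vector_derivative_within_subset subsetD)

lemma jac_cont: "jacf y z \<Longrightarrow> continuous_on {0..\<tau>} y \<and> continuous_on {0..\<tau>} z"
  unfolding jacf_def using Dv_cont by blast

lemma Hsym_inner: "t \<in> {0..\<tau>} \<Longrightarrow> (H t *v x) \<bullet> y = x \<bullet> (H t *v y)"
  by (metis Hs dot_lmul_matrix inner_commute transpose_matrix_vector)

lemma Hmv_cont: "continuous_on S y \<Longrightarrow> S \<subseteq> {0..\<tau>} \<Longrightarrow> continuous_on S (\<lambda>t. H t *v y t)"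
  using bounded_bilinear.continuous_on[OF bb_mv, of S H y] continuous_on_subset[OF Hc] by simp

lemma integrand_cont:
  assumes "continuous_on S v" "continuous_on S v'" "S \<subseteq> {0..\<tau>}"
  shows "continuous_on S (\<lambda>t. (norm (v' t))\<^sup>2 + v t \<bullet> (H t *v v t))"
  using assms Hmv_cont by (intro continuous_intros) auto

lemma jac_col:
  assumes Y: "\<forall>t\<in>{0..\<tau>}. (Y has_vector_derivative Z t) (at t within {0..\<tau>})"
    and Z: "\<forall>t\<in>{0..\<tau>}. (Z has_vector_derivative (H t ** Y t)) (at t within {0..\<tau>})"
  shows "jacf (\<lambda>t. Y t *v x) (\<lambda>t. Z t *v x)"
  unfolding jacf_def Dv_def
  using Y Z by (auto intro!: vd_mvc simp: matrix_vector_mul_assoc)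

lemma jac_add: "jacf y1 z1 \<Longrightarrow> jacf y2 z2 \<Longrightarrow> jacf (\<lambda>t. y1 t + y2 t) (\<lambda>t. z1 t + z2 t)"
  unfolding jacf_def Dv_def by (auto intro!: derivative_eq_intros simp: matrix_vector_right_distrib)

lemma wronsk:
  assumes j1: "jacf y1 z1" and j2: "jacf y2 z2" and t: "t \<in> {0..\<tau>}"
  shows "y1 t \<bullet> z2 t - z1 t \<bullet> y2 t = y1 0 \<bullet> z2 0 - z1 0 \<bullet> y2 0"
proof -
  define W where "W s = y1 s \<bullet> z2 s - z1 s \<bullet> y2 s" for s
  have "(W has_vector_derivative 0) (at s within {0..t})" if s: "s \<in> {0..t}" for s
  proof -
    have st: "s \<in> {0..\<tau>}" "{0..t} \<subseteq> {0..\<tau>}" using s t by auto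
    note d = Dv_sub[OF _ s st(2)]
    have "(W has_vector_derivative (y1 s \<bullet> (H s *v y2 s) + z1 s \<bullet> z2 s - (z1 s \<bullet> z2 s + (H s *v y1 s) \<bullet> y2 s)))
      (at s within {0..t})"
      unfolding W_def using j1 j2 unfolding jacf_def
      by (intro has_vector_derivative_diff vd_inner d) auto
    then show ?thesis using Hsym_inner[OF st(1)] by simp
  qed
  then have "((\<lambda>s. 0) has_integral (W t - W 0)) {0..t}"
    using t by (intro fundamental_theorem_of_calculus) auto
  then have "W t - W 0 = 0" using has_integral_0 has_integral_unique by blast
  then show ?thesis by (simp add: W_def)
qed

lemma energy:
  assumes j: "jacf y z" and g: "Dv g g'" and ab: "0 \<le> a" "a \<le> b" "b \<le> \<tau>"
  shows "((\<lambda>t. z t \<bullet> g' t + g t \<bullet> (H t *v y t)) has_integral (z b \<bullet> g b - z a \<bullet> g a)) {a..b}"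
proof (rule fundamental_theorem_of_calculus[OF ab(2)])
  fix s assume s: "s \<in> {a..b}"
  have sub: "{a..b} \<subseteq> {0..\<tau>}" using ab by auto
  have "((\<lambda>s. z s \<bullet> g s) has_vector_derivative (z s \<bullet> g' s + (H s *v y s) \<bullet> g s)) (at s within {a..b})"
    using j g unfolding jacf_def by (intro vd_inner Dv_sub[OF _ s sub]) auto
  then show "((\<lambda>s. z s \<bullet> g s) has_vector_derivative (z s \<bullet> g' s + g s \<bullet> (H s *v y s))) (at s within {a..b})"
    by (simp add: inner_commute)
qed

lemma Qi_jac:
  assumes j: "jacf y z" and ab: "0 \<le> a" "a \<le> b" "b \<le> \<tau>"
  shows "Qi a b y z = z b \<bullet> y b - z a \<bullet> y a"
proof -
  have "Dv y z" using j by (simp add: jacf_def)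
  from energy[OF j this ab] show ?thesis
    unfolding Qi_def by (simp add: power2_norm_eq_inner integral_unique)
qed

lemma Qi_split:
  assumes j: "jacf y z" and w: "Dv w w'" and w'c: "continuous_on {0..\<tau>} w'" and ab: "0 \<le> a" "a \<le> b" "b \<le> \<tau>"
  shows "Qi a b (\<lambda>t. y t + w t) (\<lambda>t. z t + w' t) = Qi a b y z + 2 * (z b \<bullet> w b - z a \<bullet> w a) + Qi a b w w'"
proof -
  have sub: "{a..b} \<subseteq> {0..\<tau>}" using ab by auto
  have cy: "continuous_on {a..b} y" "continuous_on {a..b} z"
    using jac_cont[OF j] continuous_on_subset[OF _ sub] by blast+
  have cw: "continuous_on {a..b} w" "continuous_on {a..b} w'"
    using Dv_cont[OF w] w'c continuous_on_subset[OF _ sub] by blast+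
  have i1: "((\<lambda>t. (norm (z t))\<^sup>2 + y t \<bullet> (H t *v y t)) has_integral Qi a b y z) {a..b}"
    unfolding Qi_def by (rule integrable_integral integrable_continuous_interval integrand_cont cy sub)+
  have i2: "((\<lambda>t. (norm (w' t))\<^sup>2 + w t \<bullet> (H t *v w t)) has_integral Qi a b w w') {a..b}"
    unfolding Qi_def by (rule integrable_integral integrable_continuous_interval integrand_cont cw sub)+
  have i3: "((\<lambda>t. 2 * (z t \<bullet> w' t + w t \<bullet> (H t *v y t))) has_integral 2 * (z b \<bullet> w b - z a \<bullet> w a)) {a..b}"
    by (rule has_integral_mult_right energy[OF j w ab])+
  have eq: "(norm (z t + w' t))\<^sup>2 + (y t + w t) \<bullet> (H t *v (y t + w t)) =
      ((norm (z t))\<^sup>2 + y t \<bullet> (H t *v y t)) + 2 * (z t \<bullet> w' t + w t \<bullet> (H t *v y t))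
      + ((norm (w' t))\<^sup>2 + w t \<bullet> (H t *v w t))" if "t \<in> {a..b}" for t
  proof -
    have "y t \<bullet> (H t *v w t) = w t \<bullet> (H t *v y t)"
      using Hsym_inner[of t "w t" "y t"] that sub by (auto simp: inner_commute)
    then show ?thesis
      by (simp add: power2_norm_eq_inner inner_add_left inner_add_right matrix_vector_right_distrib inner_commute[of "w' t" "z t"])
  qed
  have "((\<lambda>t. (norm (z t + w' t))\<^sup>2 + (y t + w t) \<bullet> (H t *v (y t + w t))) has_integral
      (Qi a b y z + 2 * (z b \<bullet> w b - z a \<bullet> w a) + Qi a b w w')) {a..b}"
    by (rule has_integral_eq[OF _ has_integral_add[OF has_integral_add[OF i1 i3] i2]]) (simp add: eq)
  then show ?thesis unfolding Qi_def by (rule integral_unique)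
qed

end


lemma det_nz_of_inj:
  fixes A :: "real^'n^'n"
  assumes "\<And>x. A *v x = 0 \<Longrightarrow> x = 0"
  shows "det A \<noteq> 0"
proof -
  have "inj ((*v) A)"
  proof (rule injI)
    fix x z assume "A *v x = A *v z"
    then have "A *v (x - z) = 0" by (simp add: matrix_vector_mult_diff_distrib)
    then show "x = z" using assms[of "x - z"] by simp
  qed
  then show ?thesis
    by (metis det_nz_iff_inj matrix_vector_mul_linear matrix_of_matrix_vector_mul)
qed

lemma minv_I: "matrix_inv (mat 1 :: real^'n^'n) = mat 1"
  using minv_props(2)[of "mat 1 :: real^'n^'n"] by simp

context jsetup begin

lemma ev_pos:
  assumes "t > 0"
  shows "\<forall>\<^sub>F s in at t within {0..\<tau>}. s \<in> {0<..\<tau>} \<and> s \<noteq> t"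
proof -
  have "\<exists>d>0. \<forall>x\<in>{0..\<tau>}. 0 < dist x t \<and> dist x t < d \<longrightarrow> x \<in> {0<..\<tau>} \<and> x \<noteq> t"
    using assms by (intro exI[of _ t]) (auto simp: dist_real_def)
  then show ?thesis by (simp add: eventually_at)
qed

lemma fixed_pos:
  assumes Y: "\<forall>t\<in>{0..\<tau>}. (Y has_vector_derivative Z t) (at t within {0..\<tau>})"
    and Z: "\<forall>t\<in>{0..\<tau>}. (Z has_vector_derivative (H t ** Y t)) (at t within {0..\<tau>})"
    and Y0: "Y 0 = 0" and Z0: "Z 0 = mat 1"
    and nd: "\<forall>t\<in>{0<..\<tau>}. det (Y t) \<noteq> 0"
    and w: "Dv w w'" and w'c: "continuous_on {0..\<tau>} w'" and w0: "w 0 = 0" and wt: "w \<tau> = 0"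
  shows "Qi 0 \<tau> w w' \<ge> 0 \<and> (Qi 0 \<tau> w w' = 0 \<longrightarrow> (\<forall>t\<in>{0..\<tau>}. w t = 0))"
proof -
  have sym: "(Y t *v x) \<bullet> (Z t *v y) = (Z t *v x) \<bullet> (Y t *v y)" if "t \<in> {0..\<tau>}" for t x y
    using wronsk[OF jac_col[OF Y Z, of x] jac_col[OF Y Z, of y] that] Y0 Z0 by simp
  have DY: "Dv Y Z" and DZ: "Dv Z (\<lambda>t. H t ** Y t)" using Y Z by (simp_all add: Dv_def)
  have cY: "continuous_on {0..\<tau>} Y" and cZ: "continuous_on {0..\<tau>} Z" and cw: "continuous_on {0..\<tau>} w"
    using Dv_cont DY DZ w by blast+
  define c where "c t = matrix_inv (Y t) *v w t" for t
  define p where "p t = w' t - Z t *v c t" for t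
  define c' where "c' t = matrix_inv (Y t) *v p t" for t
  define F where "F t = w t \<bullet> (Z t *v c t)" for t
  define Fd where "Fd t = w t \<bullet> (Z t *v c' t + (H t ** Y t) *v c t) + w' t \<bullet> (Z t *v c t)" for t
  define g where "g t = (norm (p t))\<^sup>2" for t
  define f where "f t = (norm (w' t))\<^sup>2 + w t \<bullet> (H t *v w t)" for t
  have Yc: "Y t *v c t = w t" if "t \<in> {0<..\<tau>}" for t
    using nd that by (simp add: c_def minv_mv)
  have Yc': "Y t *v c' t = p t" if "t \<in> {0<..\<tau>}" for t
    using nd that by (simp add: c'_def minv_mv)
  have lim_at: "(h \<longlongrightarrow> h t) (at t within {0..\<tau>})" if "continuous_on {0..\<tau>} h" "t \<in> {0..\<tau>}" for h :: "real \<Rightarrow> 'x::topological_space" and t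
    using that by (simp add: continuous_on_def)
  have cc: "(c \<longlongrightarrow> c t) (at t within {0..\<tau>})" if t: "t \<in> {0<..\<tau>}" for t
    unfolding c_def using t nd
    by (intro tendsto_minv lim_at cY cw) auto
  have pc: "(p \<longlongrightarrow> p t) (at t within {0..\<tau>})" if t: "t \<in> {0<..\<tau>}" for t
    unfolding p_def using t
    by (intro tendsto_intros lim_at w'c bounded_bilinear.tendsto[OF bb_mv] cZ cc) auto
  have c'c: "(c' \<longlongrightarrow> c' t) (at t within {0..\<tau>})" if t: "t \<in> {0<..\<tau>}" for t
    unfolding c'_def using t nd
    by (intro tendsto_minv lim_at cY pc) auto
  have dc: "(c has_vector_derivative c' t) (at t within {0..\<tau>})" if t: "t \<in> {0<..\<tau>}" for t
  proof -
    define r where "r s = (w s - w t - (Y s - Y t) *v c t) /\<^sub>R (s - t)" for s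
    have t': "t \<in> {0..\<tau>}" using t by auto
    have q1: "((\<lambda>s. (w s - w t) /\<^sub>R (s - t)) \<longlongrightarrow> w' t) (at t within {0..\<tau>})"
      using w t' by (simp add: Dv_def vd_quot)
    have q2: "((\<lambda>s. (Y s - Y t) /\<^sub>R (s - t)) \<longlongrightarrow> Z t) (at t within {0..\<tau>})"
      using Y t' by (simp add: vd_quot)
    have "((\<lambda>s. (w s - w t) /\<^sub>R (s - t) - ((Y s - Y t) /\<^sub>R (s - t)) *v c t) \<longlongrightarrow> w' t - Z t *v c t) (at t within {0..\<tau>})"
      by (intro tendsto_intros q1 bounded_linear.tendsto[OF bl_mv q2])
    moreover have "(w s - w t) /\<^sub>R (s - t) - ((Y s - Y t) /\<^sub>R (s - t)) *v c t = r s" for s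
      by (simp add: r_def scaleR_matrix_vector_assoc scaleR_diff_right)
    ultimately have rl: "(r \<longlongrightarrow> p t) (at t within {0..\<tau>})" by (simp add: p_def)
    have l: "((\<lambda>s. matrix_inv (Y s) *v r s) \<longlongrightarrow> c' t) (at t within {0..\<tau>})"
      unfolding c'_def using t nd by (intro tendsto_minv lim_at cY rl) auto
    have "\<forall>\<^sub>F s in at t within {0..\<tau>}. matrix_inv (Y s) *v r s = (c s - c t) /\<^sub>R (s - t)"
    proof (rule eventually_mono[OF ev_pos])
      show "t > 0" using t by simp
    next
      fix s assume s: "s \<in> {0<..\<tau>} \<and> s \<noteq> t"
      have ds: "det (Y s) \<noteq> 0" using nd s by blast
      have "matrix_inv (Y s) *v (w s - w t - (Y s - Y t) *v c t)
          = c s - matrix_inv (Y s) *v w t - c t + matrix_inv (Y s) *v (Y t *v c t)"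
        by (simp add: c_def[of s] matrix_vector_mult_diff_distrib matrix_vector_mult_diff_rdistrib minv_mv[OF ds]
             matrix_vector_right_distrib algebra_simps)
      also have "\<dots> = c s - c t" using Yc[OF t] by simp
      finally show "matrix_inv (Y s) *v r s = (c s - c t) /\<^sub>R (s - t)"
        by (simp add: r_def matrix_vector_mult_scaleR)
    qed
    then have "((\<lambda>s. (c s - c t) /\<^sub>R (s - t)) \<longlongrightarrow> c' t) (at t within {0..\<tau>})"
      using l by (rule Lim_transform_eventually[rotated])
    then show ?thesis by (simp add: vd_quot)
  qed
  have dF: "(F has_vector_derivative Fd t) (at t within {0..\<tau>})" if t: "t \<in> {0<..\<tau>}" for t
  proof -
    have t': "t \<in> {0..\<tau>}" using t by auto
    show ?thesis unfolding F_def Fd_def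
      using t' w Z dc[OF t] by (intro vd_inner vd_mv) (auto simp: Dv_def)
  qed
  have fg: "f t = g t + Fd t" if t: "t \<in> {0<..\<tau>}" for t
  proof -
    have t': "t \<in> {0..\<tau>}" using t by auto
    define P where "P = p t"
    define V where "V = Z t *v c t"
    have w': "w' t = P + V" by (simp add: P_def V_def p_def)
    have s: "w t \<bullet> (Z t *v c' t) = V \<bullet> P"
      using sym[OF t', of "c t" "c' t"] Yc[OF t] Yc'[OF t] by (simp add: V_def P_def)
    have h: "w t \<bullet> ((H t ** Y t) *v c t) = w t \<bullet> (H t *v w t)"
      using Yc[OF t] by (simp add: matrix_vector_mul_assoc[symmetric])
    show ?thesis unfolding f_def g_def Fd_def
      using s h by (simp add: w' inner_add_left inner_add_right power2_norm_eq_inner V_def[symmetric] P_def[symmetric] inner_commute[of P V])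
  qed
  have atr: "at 0 within {0..\<tau>} = at_right (0::real)" using tau by (rule at_within_Icc_at_right)
  have ev0: "\<forall>\<^sub>F s in at 0 within {0..\<tau>}. s \<in> {0<..\<tau>}"
    by (auto simp: eventually_at_filter)
  have climit: "(c \<longlongrightarrow> w' 0) (at 0 within {0..\<tau>})"
  proof -
    have t0: "(0::real) \<in> {0..\<tau>}" using tau by simp
    have "(w has_vector_derivative w' 0) (at 0 within {0..\<tau>})" using w t0 by (simp add: Dv_def)
    then have q1: "((\<lambda>s. (w s - w 0) /\<^sub>R (s - 0)) \<longlongrightarrow> w' 0) (at 0 within {0..\<tau>})"
      unfolding vd_quot .
    have "(Y has_vector_derivative Z 0) (at 0 within {0..\<tau>})" using Y t0 by simp
    then have q2: "((\<lambda>s. (Y s - Y 0) /\<^sub>R (s - 0)) \<longlongrightarrow> Z 0) (at 0 within {0..\<tau>})"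
      unfolding vd_quot .
    have l: "((\<lambda>s. matrix_inv ((Y s - Y 0) /\<^sub>R (s - 0)) *v ((w s - w 0) /\<^sub>R (s - 0))) \<longlongrightarrow> matrix_inv (Z 0) *v w' 0) (at 0 within {0..\<tau>})"
      using Z0 by (intro tendsto_minv q1 q2) simp
    have "\<forall>\<^sub>F s in at 0 within {0..\<tau>}. matrix_inv ((Y s - Y 0) /\<^sub>R (s - 0)) *v ((w s - w 0) /\<^sub>R (s - 0)) = c s"
    proof (rule eventually_mono[OF ev0])
      fix s assume s: "s \<in> {0<..\<tau>}"
      have ds: "det (Y s) \<noteq> 0" using nd s by blast
      have d2: "det ((1/s) *\<^sub>R Y s) \<noteq> 0"
      proof (rule det_nz_of_inj)
        fix x assume "(1/s) *\<^sub>R Y s *v x = 0"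
        then have "Y s *v x = 0" using s by (simp add: scaleR_matrix_vector_assoc[symmetric])
        then show "x = 0" using minv_mv(2)[OF ds, of x] by simp
      qed
      have "((1/s) *\<^sub>R Y s) *v c s = (1/s) *\<^sub>R w s"
        using Yc[OF s] by (simp add: scaleR_matrix_vector_assoc[symmetric])
      from minv_solve[OF d2 this] show "matrix_inv ((Y s - Y 0) /\<^sub>R (s - 0)) *v ((w s - w 0) /\<^sub>R (s - 0)) = c s"
        using Y0 w0 by (simp add: divide_inverse)
    qed
    moreover have "((\<lambda>s. matrix_inv ((Y s - Y 0) /\<^sub>R (s - 0)) *v ((w s - w 0) /\<^sub>R (s - 0))) \<longlongrightarrow> w' 0) (at 0 within {0..\<tau>})"
      using l unfolding Z0 minv_I by simp
    ultimately show ?thesis by (rule Lim_transform_eventually[rotated])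
  qed
  have Flim: "(F \<longlongrightarrow> 0) (at 0 within {0..\<tau>})"
  proof -
    have t0: "(0::real) \<in> {0..\<tau>}" using tau by simp
    have "(F \<longlongrightarrow> w 0 \<bullet> (Z 0 *v w' 0)) (at 0 within {0..\<tau>})"
      unfolding F_def
      by (intro tendsto_intros bounded_bilinear.tendsto[OF bb_mv] lim_at cw cZ climit t0)
    then show ?thesis using w0 by simp
  qed
  have fint: "f integrable_on {0..\<tau>}"
    unfolding f_def by (intro integrable_continuous_interval integrand_cont cw w'c) auto
  have gcont: "continuous_on {e..\<tau>} g" if e: "e \<in> {0<..\<tau>}" for e
  proof -
    have "continuous_on {e..\<tau>} p"
      unfolding continuous_on_def
    proof
      fix x assume x: "x \<in> {e..\<tau>}"
      then have "x \<in> {0<..\<tau>}" using e by auto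
      from pc[OF this] show "(p \<longlongrightarrow> p x) (at x within {e..\<tau>})"
        by (rule tendsto_within_subset) (use e in auto)
    qed
    then show ?thesis unfolding g_def by (intro continuous_intros)
  qed
  have Gid: "integral {e..\<tau>} g = integral {e..\<tau>} f + F e" if e: "e \<in> {0<..\<tau>}" for e
  proof -
    have eu: "e \<le> \<tau>" using e by simp
    have i1: "(Fd has_integral (F \<tau> - F e)) {e..\<tau>}"
    proof (rule fundamental_theorem_of_calculus[OF eu])
      fix x assume x: "x \<in> {e..\<tau>}"
      then have "x \<in> {0<..\<tau>}" using e by auto
      from dF[OF this] show "(F has_vector_derivative Fd x) (at x within {e..\<tau>})"
        by (rule has_vector_derivative_within_subset) (use e in auto)
    qed
    have i2: "(g has_integral integral {e..\<tau>} g) {e..\<tau>}"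
      by (intro integrable_integral integrable_continuous_interval gcont e)
    have "(f has_integral (integral {e..\<tau>} g + (F \<tau> - F e))) {e..\<tau>}"
      by (rule has_integral_eq[OF _ has_integral_add[OF i2 i1]]) (use e fg in auto)
    then have "integral {e..\<tau>} f = integral {e..\<tau>} g + (F \<tau> - F e)" by (rule integral_unique)
    moreover have "F \<tau> = 0" by (simp add: F_def wt)
    ultimately show ?thesis by simp
  qed
  have Ilim: "((\<lambda>e. integral {e..\<tau>} f) \<longlongrightarrow> integral {0..\<tau>} f) (at 0 within {0..\<tau>})"
    using indefinite_integral_continuous_1'[OF fint] tau by (simp add: continuous_on_def)
  have Glim: "((\<lambda>e. integral {e..\<tau>} g) \<longlongrightarrow> Qi 0 \<tau> w w') (at 0 within {0..\<tau>})"
  proof -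
    have "((\<lambda>e. integral {e..\<tau>} f + F e) \<longlongrightarrow> integral {0..\<tau>} f + 0) (at 0 within {0..\<tau>})"
      by (intro tendsto_add Ilim Flim)
    then have "((\<lambda>e. integral {e..\<tau>} f + F e) \<longlongrightarrow> Qi 0 \<tau> w w') (at 0 within {0..\<tau>})"
      by (simp add: Qi_def f_def[abs_def])
    then show ?thesis
      by (rule Lim_transform_eventually) (rule eventually_mono[OF ev0], simp add: Gid)
  qed
  have Gnn: "integral {e..\<tau>} g \<ge> 0" if e: "e \<in> {0<..\<tau>}" for e
    by (rule integral_nonneg) (auto intro: integrable_continuous_interval gcont[OF e] simp: g_def)
  have nbot: "at 0 within {0..\<tau>} \<noteq> (bot :: real filter)" by (simp add: atr)
  have Qnn: "Qi 0 \<tau> w w' \<ge> 0"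
    by (rule tendsto_lowerbound[OF Glim _ nbot]) (rule eventually_mono[OF ev0 Gnn])
  have zero: "\<forall>t\<in>{0..\<tau>}. w t = 0" if Q0: "Qi 0 \<tau> w w' = 0"
  proof -
    have G0: "integral {e..\<tau>} g = 0" if e: "e \<in> {0<..\<tau>}" for e
    proof (rule ccontr)
      assume "integral {e..\<tau>} g \<noteq> 0"
      then have pos: "integral {e..\<tau>} g > 0" using Gnn[OF e] by simp
      have "\<forall>\<^sub>F s in at 0 within {0..\<tau>}. integral {e..\<tau>} g \<le> integral {s..\<tau>} g"
      proof -
        have "\<forall>\<^sub>F s in at 0 within {0..\<tau>}. s < e"
          using e unfolding atr by (auto intro: eventually_mono[OF eventually_at_right_real[of 0 e]])
        then show ?thesis
        proof (rule eventually_mono[OF eventually_conj[OF ev0]])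
          fix s assume s: "s \<in> {0<..\<tau>} \<and> s < e"
          have gi: "g integrable_on {s..\<tau>}"
            using s by (intro integrable_continuous_interval gcont) auto
          have "integral {s..e} g + integral {e..\<tau>} g = integral {s..\<tau>} g"
            using s e by (intro Henstock_Kurzweil_Integration.integral_combine[OF _ _ gi]) auto
          moreover have "integral {s..e} g \<ge> 0"
            using s e by (intro integral_nonneg integrable_on_subinterval[OF gi]) (auto simp: g_def)
          ultimately show "integral {e..\<tau>} g \<le> integral {s..\<tau>} g" by simp
        qed
      qed
      then have "integral {e..\<tau>} g \<le> Qi 0 \<tau> w w'"
        by (rule tendsto_lowerbound[OF Glim _ nbot])
      then show False using pos Q0 by simp
    qed
    have p0: "p x = 0" if x: "x \<in> {0<..\<tau>}" for x
    proof -
      have e: "x/2 \<in> {0<..\<tau>}" using x by auto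
      have "g x = 0"
      proof (rule has_integral_0_cbox_imp_0[of "x/2" \<tau> g])
        show "continuous_on (cbox (x/2) \<tau>) g" using gcont[OF e] by simp
        show "\<And>y. y \<in> box (x/2) \<tau> \<Longrightarrow> 0 \<le> g y" by (simp add: g_def)
        show "(g has_integral 0) (cbox (x/2) \<tau>)"
          using G0[OF e] integrable_continuous_interval[OF gcont[OF e]]
          by (metis box_real(2) has_integral_integral)
        show "box (x/2) \<tau> \<noteq> {}" using x by auto
        show "x \<in> cbox (x/2) \<tau>" using x by auto
      qed
      then show ?thesis by (simp add: g_def)
    qed
    show ?thesis
    proof
      fix t assume t: "t \<in> {0..\<tau>}"
      show "w t = 0"
      proof (cases "t = 0")
        case True then show ?thesis using w0 by simp
      next
        case False
        then have t': "t \<in> {0<..\<tau>}" using t by auto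
        have "((\<lambda>s. 0) has_integral (c \<tau> - c t)) {t..\<tau>}"
        proof (rule has_integral_eq[OF _ fundamental_theorem_of_calculus[of t \<tau> c c']])
          show "t \<le> \<tau>" using t by simp
        next
          fix x assume x: "x \<in> {t..\<tau>}"
          then have "x \<in> {0<..\<tau>}" using t' by auto
          then show "c' x = 0" using p0 by (simp add: c'_def)
        next
          fix x assume x: "x \<in> {t..\<tau>}"
          then have "x \<in> {0<..\<tau>}" using t' by auto
          from dc[OF this] show "(c has_vector_derivative c' x) (at x within {t..\<tau>})"
            by (rule has_vector_derivative_within_subset) (use t' in auto)
        qed
        then have "c \<tau> - c t = 0" using has_integral_0 has_integral_unique by blast
        moreover have "c \<tau> = 0" by (simp add: c_def wt)
        ultimately have "c t = 0" by simp
        then show ?thesis using Yc[OF t'] by simp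
      qed
    qed
  qed
  show ?thesis using Qnn zero by blast
qed

end


lemma glue2:
  fixes f g :: "real \<Rightarrow> 'a::real_normed_vector"
  assumes mb: "a \<le> m" "m < b" and x: "x \<in> {a..b}"
    and f: "\<And>y. y \<in> {a..m} \<Longrightarrow> (f has_vector_derivative f' y) (at y within {a..m})"
    and g: "\<And>y. y \<in> {m..b} \<Longrightarrow> (g has_vector_derivative g' y) (at y within {m..b})"
    and c1: "f m = g m" and c2: "f' m = g' m"
  shows "((\<lambda>y. if y \<le> m then f y else g y) has_vector_derivative (if x \<le> m then f' x else g' x)) (at x within {a..b})"
proof -
  have cS: "closure {a..m} = {a..m}" by simp
  have cT: "closure {m<..b} = {m..b}" using mb by (simp add: closure_greaterThanAtMost)
  have un: "{a..m} \<union> {m<..b} = {a..b}" using mb by auto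
  have i: "{a..m} \<inter> {m..b} = {m}" using mb by auto
  have D: "((\<lambda>y. if y \<in> {a..m} then f y else g y) has_vector_derivative (if x \<in> {a..m} then f' x else g' x)) (at x within {a..b})"
  proof (rule has_vector_derivative_If_within_closures[where T="{m<..b}"])
    show "x \<in> {a..m} \<union> {m<..b}" using x un by simp
    show "{a..b} = {a..m} \<union> {m<..b}" using un by simp
    show "(f has_vector_derivative f' x) (at x within {a..m} \<union> closure {a..m} \<inter> closure {m<..b})"
      if "x \<in> {a..m} \<union> closure {a..m} \<inter> closure {m<..b}"
    proof -
      have e: "{a..m} \<union> {a..m} \<inter> {m..b} = {a..m}" using mb by auto
      show ?thesis using that f unfolding cS cT e by simp
    qed
    show "(g has_vector_derivative g' x) (at x within {m<..b} \<union> closure {a..m} \<inter> closure {m<..b})"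
      if "x \<in> {m<..b} \<union> closure {a..m} \<inter> closure {m<..b}"
    proof -
      have e: "{m<..b} \<union> {a..m} \<inter> {m..b} = {m..b}" using mb by auto
      show ?thesis using that g unfolding cS cT e by simp
    qed
    show "x \<in> closure {a..m} \<Longrightarrow> x \<in> closure {m<..b} \<Longrightarrow> f x = g x" using c1 cT by auto
    show "x \<in> closure {a..m} \<Longrightarrow> x \<in> closure {m<..b} \<Longrightarrow> f' x = g' x" using c2 cT by auto
  qed
  have e1: "(if x \<in> {a..m} then f' x else g' x) = (if x \<le> m then f' x else g' x)" using x by auto
  have e2: "(if y \<le> m then f y else g y) = (if y \<in> {a..m} then f y else g y)" if "y \<in> {a..b}" for y
    using that by auto
  show ?thesis
    using has_vector_derivative_transform[OF x e2 D] unfolding e1 .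
qed

definition bet :: "real \<Rightarrow> real \<Rightarrow> real \<Rightarrow> real" where
  "bet c d t = (if t \<le> c - d then 0 else - (c - t) * (1 - (c - t) / d)\<^sup>2)"
definition bet' :: "real \<Rightarrow> real \<Rightarrow> real \<Rightarrow> real" where
  "bet' c d t = (if t \<le> c - d then 0 else (1 - (c - t) / d)\<^sup>2 - 2 * ((c - t) / d) * (1 - (c - t) / d))"

lemma bet_deriv:
  assumes d: "d > 0" and ab: "a \<le> c - d" "c - d < b" and x: "x \<in> {a..b}"
  shows "(bet c d has_vector_derivative bet' c d x) (at x within {a..b})"
proof -
  have "((\<lambda>y. if y \<le> c - d then (\<lambda>_. 0::real) y else (\<lambda>t. - (c - t) * (1 - (c - t) / d)\<^sup>2) y) has_vector_derivative
      (if x \<le> c - d then (\<lambda>_. 0) x else (\<lambda>t. (1 - (c - t) / d)\<^sup>2 - 2 * ((c - t) / d) * (1 - (c - t) / d)) x)) (at x within {a..b})"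
  proof (rule glue2[OF ab x])
    fix y
    show "((\<lambda>_. 0::real) has_vector_derivative 0) (at y within {a..c - d})" by (rule has_vector_derivative_const)
    have "((\<lambda>t. - (c - t) * (1 - (c - t) / d)\<^sup>2) has_real_derivative
      ((1 - (c - y) / d)\<^sup>2 - 2 * ((c - y) / d) * (1 - (c - y) / d))) (at y within {c - d..b})"
      using d apply -
      apply (rule derivative_eq_intros refl)+
      apply simp
      apply (rule refl)
      apply (rule refl)
      apply (rule refl)
      apply (simp add: power2_eq_square field_simps)
      done
    then show "((\<lambda>t. - (c - t) * (1 - (c - t) / d)\<^sup>2) has_vector_derivative
      ((1 - (c - y) / d)\<^sup>2 - 2 * ((c - y) / d) * (1 - (c - y) / d))) (at y within {c - d..b})"
      by (simp add: has_real_derivative_iff_has_vector_derivative)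
  qed (use d in auto)
  then show ?thesis unfolding bet_def[abs_def] bet'_def by simp
qed

lemma bet_bounds:
  assumes d: "d > 0" and t: "t \<le> c"
  shows "\<bar>bet c d t\<bar> \<le> d" "\<bar>bet' c d t\<bar> \<le> 1" "t \<le> c - d \<Longrightarrow> bet c d t = 0 \<and> bet' c d t = 0"
proof -
  show "t \<le> c - d \<Longrightarrow> bet c d t = 0 \<and> bet' c d t = 0" by (simp add: bet_def bet'_def)
  show "\<bar>bet c d t\<bar> \<le> d"
  proof (cases "t \<le> c - d")
    case False
    define a where "a = (c - t) / d"
    have a: "0 \<le> a" "a \<le> 1" using False t d by (auto simp: a_def field_simps)
    have "\<bar>bet c d t\<bar> = (c - t) * (1 - a)\<^sup>2" using False t by (simp add: bet_def a_def abs_mult)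
    also have "\<dots> \<le> (c - t) * 1" using a t by (intro mult_left_mono) (auto simp: power_le_one)
    finally show ?thesis using False by simp
  qed (simp add: bet_def d less_imp_le)
  show "\<bar>bet' c d t\<bar> \<le> 1"
  proof (cases "t \<le> c - d")
    case False
    define a where "a = (c - t) / d"
    have a: "0 \<le> a" "a \<le> 1" using False t d by (auto simp: a_def field_simps)
    have e: "bet' c d t = 1 - 4 * a + 3 * a\<^sup>2" using False by (simp add: bet'_def a_def[symmetric] power2_eq_square algebra_simps)
    have h1: "a * a \<le> a" using a by (simp add: mult_left_le)
    have h2: "0 \<le> (a - 2/3)\<^sup>2" by simp
    show ?thesis unfolding e using h1 h2 a by (simp add: abs_le_iff power2_eq_square algebra_simps)
  qed (simp add: bet'_def)
qed

lemma vd_scal: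
  assumes "(f has_real_derivative f') (at x within S)"
  shows "((\<lambda>t. f t *\<^sub>R (p::'a::real_normed_vector)) has_vector_derivative f' *\<^sub>R p) (at x within S)"
  using bounded_linear.has_vector_derivative[OF bounded_linear_scaleR_left assms[unfolded has_real_derivative_iff_has_vector_derivative]] .

context jsetup begin

lemma Hbound: obtains K where "K \<ge> 0" "\<And>t x. t \<in> {0..\<tau>} \<Longrightarrow> x \<bullet> (H t *v x) \<le> K * (norm x)\<^sup>2"
proof -
  have "compact (H ` {0..\<tau>})" by (rule compact_continuous_image[OF Hc compact_Icc])
  then obtain B where B: "\<And>t. t \<in> {0..\<tau>} \<Longrightarrow> norm (H t) \<le> B"
    using compact_imp_bounded bounded_iff by (metis image_eqI)
  define K where "K = 9 * max B 0"
  show ?thesis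
  proof (rule that[of K])
    show "K \<ge> 0" by (simp add: K_def)
    fix t x assume t: "t \<in> {0..\<tau>}"
    have "x \<bullet> (H t *v x) \<le> norm x * norm (H t *v x)" by (rule norm_cauchy_schwarz)
    also have "\<dots> \<le> norm x * (9 * norm (H t) * norm x)" by (intro mult_left_mono norm_mv_le) simp
    also have "\<dots> \<le> norm x * (K * norm x)"
      using B[OF t] by (intro mult_left_mono mult_right_mono) (auto simp: K_def)
    finally show "x \<bullet> (H t *v x) \<le> K * (norm x)\<^sup>2" by (simp add: power2_eq_square algebra_simps)
  qed
qed

lemma nonzero_jac:
  assumes u: "Dv u uz" and u0: "u 0 = 0" and k: "uz 0 \<noteq> 0" and b: "0 < b" "b \<le> \<tau>"
  shows "\<exists>t\<in>{0..b}. u t \<noteq> 0"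
proof (rule ccontr)
  assume "\<not> ?thesis"
  then have z: "\<And>t. t \<in> {0..b} \<Longrightarrow> u t = 0" by auto
  have 0: "(0::real) \<in> {0..b}" using b by simp
  have d1: "(u has_vector_derivative uz 0) (at 0 within {0..b})"
    using Dv_sub[OF u 0] b by auto
  have d2: "(u has_vector_derivative 0) (at 0 within {0..b})"
    by (rule has_vector_derivative_transform[OF 0 z has_vector_derivative_const])
  have "uz 0 = 0"
    using vector_derivative_unique_within_closed_interval[of 0 b 0 u] d1 d2 b by simp
  then show False using k by simp
qed

end


lemma sq2: fixes x y :: real shows "(x + y)\<^sup>2 \<le> 2 * x\<^sup>2 + 2 * y\<^sup>2"
proof -
  have "0 \<le> (x - y)\<^sup>2" by simp
  then show ?thesis by (simp add: power2_eq_square algebra_simps)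
qed

context jsetup begin

lemma quad_bound:
  assumes t: "t \<in> {0..\<tau>}" and K: "\<And>t x. t \<in> {0..\<tau>} \<Longrightarrow> x \<bullet> (H t *v x) \<le> K * (norm x)\<^sup>2"
  shows "(norm (s' *\<^sub>R p))\<^sup>2 + (s *\<^sub>R p) \<bullet> (H t *v (s *\<^sub>R p)) \<le> (norm p)\<^sup>2 * (s'\<^sup>2 + K * s\<^sup>2)"
proof -
  have "(s *\<^sub>R p) \<bullet> (H t *v (s *\<^sub>R p)) = s\<^sup>2 * (p \<bullet> (H t *v p))"
    by (simp add: matrix_vector_mult_scaleR power2_eq_square)
  also have "\<dots> \<le> s\<^sup>2 * (K * (norm p)\<^sup>2)" by (rule mult_left_mono[OF K[OF t]]) simp
  finally have "(s *\<^sub>R p) \<bullet> (H t *v (s *\<^sub>R p)) \<le> s\<^sup>2 * (K * (norm p)\<^sup>2)" .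
  moreover have "(norm (s' *\<^sub>R p))\<^sup>2 = s'\<^sup>2 * (norm p)\<^sup>2" by (simp add: power_mult_distrib)
  ultimately show ?thesis by (simp add: algebra_simps)
qed

lemma nec3:
  assumes ju: "jacf u uz" and u0: "u 0 = 0" and uc: "u c = 0" and c: "0 < c" "c < \<tau>" and p: "uz c \<noteq> 0"
  shows "\<exists>v v'. Dv v v' \<and> continuous_on {0..\<tau>} v' \<and> v 0 = 0 \<and> v \<tau> = 0 \<and> (\<exists>t\<in>{0..\<tau>}. v t \<noteq> 0) \<and> Qi 0 \<tau> v v' < 0"
proof -
  define p where "p = uz c"
  have pnz: "p \<noteq> 0" using p by (simp add: p_def)
  have Du: "Dv u uz" and cuz: "continuous_on {0..\<tau>} uz" and cu: "continuous_on {0..\<tau>} u"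
    using ju jac_cont by (auto simp: jacf_def)
  obtain K where K: "K \<ge> 0" "\<And>t x. t \<in> {0..\<tau>} \<Longrightarrow> x \<bullet> (H t *v x) \<le> K * (norm x)\<^sup>2" using Hbound by blast
  define al where "al t = 2 * t / c - t\<^sup>2 / c\<^sup>2" for t
  define al' where "al' t = 2 / c - 2 * t / c\<^sup>2" for t
  define e where "e = (\<tau> - c)\<^sup>2"
  have tc: "\<tau> - c \<noteq> 0" using c by simp
  have e0: "e > 0" using tc by (simp add: e_def)
  define sg where "sg t = 1 - (t - c) * (t - c) / e" for t
  define sg' where "sg' t = - 2 * (t - c) / e" for t
  have dal: "(al has_real_derivative al' t) (at t within S)" for t S
    unfolding al_def[abs_def] al'_def using c
    by (auto intro!: derivative_eq_intros simp: field_simps power2_eq_square)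
  have dsg: "(sg has_real_derivative sg' t) (at t within S)" for t S
    unfolding sg_def[abs_def] sg'_def using e0
    by (auto intro!: derivative_eq_intros simp: field_simps)
  have cal: "continuous_on S al" "continuous_on S al'" "continuous_on S sg" "continuous_on S sg'" for S
    unfolding al_def[abs_def] al'_def[abs_def] sg_def[abs_def] sg'_def[abs_def]
    using c e0 by (auto intro!: continuous_intros)
  have alc: "al c = 1" "al' c = 0" "al 0 = 0" using c by (simp_all add: al_def al'_def power2_eq_square field_simps)
  have sgc: "sg c = 1" "sg' c = 0" "sg \<tau> = 0" using e0 c by (simp_all add: sg_def sg'_def e_def power2_eq_square)
  define Ca where "Ca = integral {0..c} (\<lambda>t. (al' t)\<^sup>2 + K * (al t)\<^sup>2)"
  define Cs where "Cs = integral {c..\<tau>} (\<lambda>t. (sg' t)\<^sup>2 + K * (sg t)\<^sup>2)"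
  have iCa: "((\<lambda>t. (al' t)\<^sup>2 + K * (al t)\<^sup>2) has_integral Ca) {0..c}"
    unfolding Ca_def using cal by (intro integrable_integral integrable_continuous_interval continuous_intros)
  have iCs: "((\<lambda>t. (sg' t)\<^sup>2 + K * (sg t)\<^sup>2) has_integral Cs) {c..\<tau>}"
    unfolding Cs_def using cal by (intro integrable_integral integrable_continuous_interval continuous_intros)
  have Ca0: "Ca \<ge> 0" by (rule has_integral_nonneg[OF iCa]) (use K(1) in simp)
  have Cs0: "Cs \<ge> 0" by (rule has_integral_nonneg[OF iCs]) (use K(1) in simp)
  define lam where "lam = 1 / (2 * Ca + Cs + 1)"
  have lam0: "lam > 0" using Ca0 Cs0 by (simp add: lam_def)
  have lamX: "lam * (2 * Ca + Cs) \<le> 1" using Ca0 Cs0 by (simp add: lam_def field_simps)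
  define d where "d = min (c/2) (min 1 (lam / (4 * (1 + K))))"
  have d0: "d > 0" using c lam0 K(1) by (simp add: d_def)
  have dc1: "d \<le> c/2" "d \<le> 1" "d \<le> lam / (4 * (1 + K))" unfolding d_def by linarith+
  have "(1 + K) * d \<le> (1 + K) * (lam / (4 * (1 + K)))" using dc1(3) K(1) by (intro mult_left_mono) auto
  also have "\<dots> = lam / 4" using K(1) by (simp add: field_simps)
  finally have dc: "d \<le> c/2" "d \<le> 1" "(1 + K) * d \<le> lam / 4" using dc1 by auto
  define ph where "ph t = lam * al t + bet c d t" for t
  define ph' where "ph' t = lam * al' t + bet' c d t" for t
  have dph: "(ph has_real_derivative ph' t) (at t within {0..\<tau>})" if t: "t \<in> {0..\<tau>}" for t
  proof -
    have "(bet c d has_vector_derivative bet' c d t) (at t within {0..\<tau>})"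
      by (rule bet_deriv[OF d0 _ _ t]) (use dc c d0 in auto)
    then have "(bet c d has_real_derivative bet' c d t) (at t within {0..\<tau>})"
      by (simp add: has_real_derivative_iff_has_vector_derivative)
    then show ?thesis unfolding ph_def[abs_def] ph'_def
      by (intro DERIV_add DERIV_cmult dal)
  qed
  have cbet': "continuous_on S (bet' c d)" for S
  proof -
    have "continuous_on ({..c-d} \<union> {c-d..}) (\<lambda>t. if t \<le> c - d then 0 else (1 - (c - t) / d)\<^sup>2 - 2 * ((c - t) / d) * (1 - (c - t) / d))"
      by (rule continuous_on_cases) (use d0 in \<open>auto intro!: continuous_intros\<close>)
    moreover have "{..c-d} \<union> {c-d..} = UNIV" by auto
    ultimately have "continuous_on UNIV (bet' c d)" unfolding bet'_def[abs_def] by simp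
    then show ?thesis by (rule continuous_on_subset) simp
  qed
  have cph': "continuous_on S ph'" for S unfolding ph'_def[abs_def] using cal cbet' by (intro continuous_intros)
  define w where "w t = (- ph t) *\<^sub>R p" for t
  define w' where "w' t = (- ph' t) *\<^sub>R p" for t
  have Dw: "Dv w w'" unfolding Dv_def w_def[abs_def] w'_def
    by (intro ballI vd_scal DERIV_minus dph)
  have cw': "continuous_on {0..\<tau>} w'" unfolding w'_def[abs_def] using cph' by (intro continuous_intros)
  have cd0: "0 \<le> c - d" using dc(1) c by linarith
  have betc: "bet c d c = 0" "bet' c d c = 1" "bet c d 0 = 0"
    using d0 cd0 by (simp_all add: bet_def bet'_def)
  have wc: "w c = (- lam) *\<^sub>R p" "w' c = - p" "w 0 = 0"
    using alc betc by (simp_all add: w_def w'_def ph_def ph'_def)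
  define v where "v t = (if t \<le> c then u t + w t else (- (lam * sg t)) *\<^sub>R p)" for t
  define v' where "v' t = (if t \<le> c then uz t + w' t else (- (lam * sg' t)) *\<^sub>R p)" for t
  have Dv: "Dv v v'"
    unfolding Dv_def
  proof
    fix x assume x: "x \<in> {0..\<tau>}"
    have "((\<lambda>y. if y \<le> c then (\<lambda>t. u t + w t) y else (\<lambda>t. (- (lam * sg t)) *\<^sub>R p) y) has_vector_derivative
       (if x \<le> c then (\<lambda>t. uz t + w' t) x else (\<lambda>t. (- (lam * sg' t)) *\<^sub>R p) x)) (at x within {0..\<tau>})"
    proof (rule glue2[OF _ c(2) x])
      show "0 \<le> c" using c by simp
    next
      fix y assume y: "y \<in> {0..c}"
      have sub: "{0..c} \<subseteq> {0..\<tau>}" using c by auto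
      show "((\<lambda>t. u t + w t) has_vector_derivative uz y + w' y) (at y within {0..c})"
        by (intro has_vector_derivative_add Dv_sub[OF Du y sub] Dv_sub[OF Dw y sub])
    next
      fix y
      show "((\<lambda>t. (- (lam * sg t)) *\<^sub>R p) has_vector_derivative (- (lam * sg' y)) *\<^sub>R p) (at y within {c..\<tau>})"
        by (intro vd_scal DERIV_minus DERIV_cmult dsg)
    next
      show "u c + w c = (- (lam * sg c)) *\<^sub>R p" using uc wc sgc by simp
    next
      show "uz c + w' c = (- (lam * sg' c)) *\<^sub>R p" using wc sgc by (simp add: p_def)
    qed
    then show "(v has_vector_derivative v' x) (at x within {0..\<tau>})"
      by (simp add: v_def[abs_def] v'_def)
  qed
  have cv': "continuous_on {0..\<tau>} v'"
  proof -
    have c1: "continuous_on {0..c} (\<lambda>t. uz t + w' t)"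
      using c by (intro continuous_intros continuous_on_subset[OF cuz] continuous_on_subset[OF cw']) auto
    have c2: "continuous_on {c..\<tau>} (\<lambda>t. (- (lam * sg' t)) *\<^sub>R p)"
      using cal by (intro continuous_intros)
    have "continuous_on ({0..c} \<union> {c..\<tau>}) (\<lambda>t. if t \<le> c then uz t + w' t else (- (lam * sg' t)) *\<^sub>R p)"
    proof (rule continuous_on_cases[OF _ _ c1 c2])
      show "\<forall>t. t \<in> {0..c} \<and> \<not> t \<le> c \<or> t \<in> {c..\<tau>} \<and> t \<le> c \<longrightarrow> uz t + w' t = (- (lam * sg' t)) *\<^sub>R p"
      proof (intro allI impI)
        fix t assume "t \<in> {0..c} \<and> \<not> t \<le> c \<or> t \<in> {c..\<tau>} \<and> t \<le> c"
        then have "t = c" by auto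
        then show "uz t + w' t = (- (lam * sg' t)) *\<^sub>R p" using wc sgc by (simp add: p_def)
      qed
    qed auto
    moreover have "{0..c} \<union> {c..\<tau>} = {0..\<tau>}" using c by auto
    ultimately show ?thesis by (simp add: v'_def[abs_def])
  qed
  have v0: "v 0 = 0" using u0 wc c by (simp add: v_def)
  have vt: "v \<tau> = 0" using sgc c by (simp add: v_def)
  have vc: "v c = (- lam) *\<^sub>R p" using uc wc by (simp add: v_def)
  have vnz: "\<exists>t\<in>{0..\<tau>}. v t \<noteq> 0"
    using c vc lam0 pnz by (intro bexI[of _ c]) auto
  have sub0c: "{0..c} \<subseteq> {0..\<tau>}" and subct: "{c..\<tau>} \<subseteq> {0..\<tau>}" using c by auto
  have cv: "continuous_on {0..\<tau>} v" by (rule Dv_cont[OF Dv])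
  have cw: "continuous_on {0..\<tau>} w" by (rule Dv_cont[OF Dw])
  have intv: "(\<lambda>t. (norm (v' t))\<^sup>2 + v t \<bullet> (H t *v v t)) integrable_on {0..\<tau>}"
    by (intro integrable_continuous_interval integrand_cont cv cv') auto
  have Qsplit: "Qi 0 \<tau> v v' = Qi 0 c v v' + Qi c \<tau> v v'"
    unfolding Qi_def using Henstock_Kurzweil_Integration.integral_combine[OF _ _ intv, of c] c by simp
  have Q1: "Qi 0 c v v' = - 2 * lam * (norm p)\<^sup>2 + Qi 0 c w w'"
  proof -
    have "Qi 0 c v v' = Qi 0 c (\<lambda>t. u t + w t) (\<lambda>t. uz t + w' t)"
      unfolding Qi_def by (rule integral_cong) (simp add: v_def v'_def)
    also have "\<dots> = Qi 0 c u uz + 2 * (uz c \<bullet> w c - uz 0 \<bullet> w 0) + Qi 0 c w w'"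
      using c by (intro Qi_split[OF ju Dw cw']) auto
    also have "Qi 0 c u uz = 0" using Qi_jac[OF ju] c u0 uc by simp
    finally show ?thesis using wc by (simp add: p_def[symmetric] power2_norm_eq_inner)
  qed
  define B where "B t = (bet' c d t)\<^sup>2 + K * (bet c d t)\<^sup>2" for t
  have cbet: "continuous_on {0..\<tau>} (bet c d)"
    unfolding continuous_on_eq_continuous_within
  proof
    fix x assume x: "x \<in> {0..\<tau>}"
    have "(bet c d has_vector_derivative bet' c d x) (at x within {0..\<tau>})"
      by (rule bet_deriv[OF d0 _ _ x]) (use dc c d0 in auto)
    then show "continuous (at x within {0..\<tau>}) (bet c d)" by (rule has_vector_derivative_continuous)
  qed
  have cB: "continuous_on {0..c} B"
    unfolding B_def[abs_def] using cbet' continuous_on_subset[OF cbet sub0c] by (intro continuous_intros)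
  have IB: "integral {0..c} B \<le> (1 + K) * d"
  proof -
    have iB: "B integrable_on {0..c}" by (rule integrable_continuous_interval[OF cB])
    have "integral {0..c - d} B + integral {c - d..c} B = integral {0..c} B"
      using cd0 d0 by (intro Henstock_Kurzweil_Integration.integral_combine[OF _ _ iB]) auto
    moreover have "integral {0..c - d} B = integral {0..c - d} (\<lambda>t. 0::real)"
      by (rule integral_cong) (use bet_bounds(3)[OF d0] d0 in \<open>auto simp: B_def\<close>)
    moreover have "integral {c - d..c} B \<le> integral {c - d..c} (\<lambda>t. 1 + K)"
    proof (rule integral_le)
      show "B integrable_on {c - d..c}" using cd0 by (intro integrable_on_subinterval[OF iB]) auto
      show "(\<lambda>t. 1 + K) integrable_on {c - d..c}" by (intro integrable_continuous_interval continuous_intros)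
    next
      fix t assume t: "t \<in> {c - d..c}"
      have b1: "\<bar>bet c d t\<bar> \<le> d" and b2: "\<bar>bet' c d t\<bar> \<le> 1" using bet_bounds[OF d0, of t c] t by auto
      have "(bet' c d t)\<^sup>2 \<le> 1" using b2 by (simp add: abs_square_le_1)
      moreover have "(bet c d t)\<^sup>2 \<le> 1"
        using b1 dc(2) by (simp add: abs_square_le_1)
      ultimately show "B t \<le> 1 + K" unfolding B_def using K(1)
        by (smt (verit) mult_left_le)
    qed
    ultimately show ?thesis using d0 by (simp add: algebra_simps)
  qed
  have Q2: "Qi 0 c w w' \<le> (norm p)\<^sup>2 * (2 * lam\<^sup>2 * Ca + 2 * integral {0..c} B)"
  proof -
    have iB: "(B has_integral integral {0..c} B) {0..c}"
      by (intro integrable_integral integrable_continuous_interval cB)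
    have iR: "((\<lambda>t. (norm p)\<^sup>2 * (2 * lam\<^sup>2 * ((al' t)\<^sup>2 + K * (al t)\<^sup>2) + 2 * B t)) has_integral
        (norm p)\<^sup>2 * (2 * lam\<^sup>2 * Ca + 2 * integral {0..c} B)) {0..c}"
      by (intro has_integral_mult_right has_integral_add iCa iB)
    have iW: "(\<lambda>t. (norm (w' t))\<^sup>2 + w t \<bullet> (H t *v w t)) integrable_on {0..c}"
      by (intro integrable_continuous_interval integrand_cont continuous_on_subset[OF cw sub0c]
          continuous_on_subset[OF cw' sub0c] sub0c)
    have "Qi 0 c w w' \<le> integral {0..c} (\<lambda>t. (norm p)\<^sup>2 * (2 * lam\<^sup>2 * ((al' t)\<^sup>2 + K * (al t)\<^sup>2) + 2 * B t))"
      unfolding Qi_def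
    proof (rule integral_le[OF iW])
      show "(\<lambda>t. (norm p)\<^sup>2 * (2 * lam\<^sup>2 * ((al' t)\<^sup>2 + K * (al t)\<^sup>2) + 2 * B t)) integrable_on {0..c}"
        using iR by blast
    next
      fix t assume t: "t \<in> {0..c}"
      then have t': "t \<in> {0..\<tau>}" using sub0c by auto
      have qb: "(norm (w' t))\<^sup>2 + w t \<bullet> (H t *v w t) \<le> (norm p)\<^sup>2 * ((- ph' t)\<^sup>2 + K * (- ph t)\<^sup>2)"
        unfolding w_def w'_def by (rule quad_bound[OF t' K(2)])
      have s1: "(ph' t)\<^sup>2 \<le> 2 * lam\<^sup>2 * (al' t)\<^sup>2 + 2 * (bet' c d t)\<^sup>2"
        unfolding ph'_def using sq2[of "lam * al' t" "bet' c d t"] by (simp add: power_mult_distrib)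
      have s2: "(ph t)\<^sup>2 \<le> 2 * lam\<^sup>2 * (al t)\<^sup>2 + 2 * (bet c d t)\<^sup>2"
        unfolding ph_def using sq2[of "lam * al t" "bet c d t"] by (simp add: power_mult_distrib)
      have "(ph' t)\<^sup>2 + K * (ph t)\<^sup>2 \<le> 2 * lam\<^sup>2 * ((al' t)\<^sup>2 + K * (al t)\<^sup>2) + 2 * B t"
        using s1 mult_left_mono[OF s2 K(1)] unfolding B_def by (simp add: algebra_simps)
      then have "(norm p)\<^sup>2 * ((ph' t)\<^sup>2 + K * (ph t)\<^sup>2) \<le> (norm p)\<^sup>2 * (2 * lam\<^sup>2 * ((al' t)\<^sup>2 + K * (al t)\<^sup>2) + 2 * B t)"
        by (rule mult_left_mono) simp
      with qb show "(norm (w' t))\<^sup>2 + w t \<bullet> (H t *v w t) \<le> (norm p)\<^sup>2 * (2 * lam\<^sup>2 * ((al' t)\<^sup>2 + K * (al t)\<^sup>2) + 2 * B t)"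
        by simp
    qed
    also have "\<dots> = (norm p)\<^sup>2 * (2 * lam\<^sup>2 * Ca + 2 * integral {0..c} B)" using iR by (rule integral_unique)
    finally show ?thesis .
  qed
  have Q3: "Qi c \<tau> v v' \<le> (norm p)\<^sup>2 * (lam\<^sup>2 * Cs)"
  proof -
    have iR: "((\<lambda>t. (norm p)\<^sup>2 * (lam\<^sup>2 * ((sg' t)\<^sup>2 + K * (sg t)\<^sup>2))) has_integral (norm p)\<^sup>2 * (lam\<^sup>2 * Cs)) {c..\<tau>}"
      by (intro has_integral_mult_right iCs)
    have iV: "(\<lambda>t. (norm (v' t))\<^sup>2 + v t \<bullet> (H t *v v t)) integrable_on {c..\<tau>}"
      using c by (intro integrable_on_subinterval[OF intv]) auto
    have "Qi c \<tau> v v' \<le> integral {c..\<tau>} (\<lambda>t. (norm p)\<^sup>2 * (lam\<^sup>2 * ((sg' t)\<^sup>2 + K * (sg t)\<^sup>2)))"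
      unfolding Qi_def
    proof (rule integral_le[OF iV])
      show "(\<lambda>t. (norm p)\<^sup>2 * (lam\<^sup>2 * ((sg' t)\<^sup>2 + K * (sg t)\<^sup>2))) integrable_on {c..\<tau>}"
        using iR by blast
    next
      fix t assume t: "t \<in> {c..\<tau>}"
      then have t': "t \<in> {0..\<tau>}" using subct by auto
      have ve: "v t = (- (lam * sg t)) *\<^sub>R p" "v' t = (- (lam * sg' t)) *\<^sub>R p"
      proof -
        show "v t = (- (lam * sg t)) *\<^sub>R p"
        proof (cases "t = c")
          case True then show ?thesis using vc sgc by simp
        qed (use t in \<open>auto simp: v_def\<close>)
        show "v' t = (- (lam * sg' t)) *\<^sub>R p"
        proof (cases "t = c")
          case True then show ?thesis using wc sgc by (simp add: v'_def p_def)
        qed (use t in \<open>auto simp: v'_def\<close>)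
      qed
      have "(norm (v' t))\<^sup>2 + v t \<bullet> (H t *v v t) \<le> (norm p)\<^sup>2 * ((- (lam * sg' t))\<^sup>2 + K * (- (lam * sg t))\<^sup>2)"
        unfolding ve by (rule quad_bound[OF t' K(2)])
      also have "\<dots> = (norm p)\<^sup>2 * (lam\<^sup>2 * ((sg' t)\<^sup>2 + K * (sg t)\<^sup>2))"
        by (simp add: power_mult_distrib algebra_simps)
      finally show "(norm (v' t))\<^sup>2 + v t \<bullet> (H t *v v t) \<le> (norm p)\<^sup>2 * (lam\<^sup>2 * ((sg' t)\<^sup>2 + K * (sg t)\<^sup>2))" .
    qed
    also have "\<dots> = (norm p)\<^sup>2 * (lam\<^sup>2 * Cs)" using iR by (rule integral_unique)
    finally show ?thesis .
  qed
  have np: "(norm p)\<^sup>2 > 0" using pnz by simp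
  have l2: "lam\<^sup>2 * (2 * Ca + Cs) \<le> lam"
    using mult_left_mono[OF lamX, of lam] lam0 by (simp add: power2_eq_square algebra_simps)
  have "Qi 0 \<tau> v v' \<le> (norm p)\<^sup>2 * (- 2 * lam + (lam\<^sup>2 * (2 * Ca + Cs)) + 2 * ((1 + K) * d))"
  proof -
    have "2 * integral {0..c} B \<le> 2 * ((1 + K) * d)" using IB by simp
    then have "(norm p)\<^sup>2 * (2 * lam\<^sup>2 * Ca + 2 * integral {0..c} B) \<le> (norm p)\<^sup>2 * (2 * lam\<^sup>2 * Ca + 2 * ((1 + K) * d))"
      by (intro mult_left_mono) auto
    then show ?thesis using Qsplit Q1 Q2 Q3 by (simp add: algebra_simps)
  qed
  also have "\<dots> \<le> (norm p)\<^sup>2 * (- lam / 2)"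
    using l2 dc(3) by (intro mult_left_mono) auto
  also have "\<dots> < 0" using np lam0 by (simp add: mult_pos_neg)
  finally have "Qi 0 \<tau> v v' < 0" .
  then show ?thesis using Dv cv' v0 vt vnz by blast
qed

lemma nec:
  assumes Y: "\<forall>t\<in>{0..\<tau>}. (Y has_vector_derivative Z t) (at t within {0..\<tau>})"
    and Z: "\<forall>t\<in>{0..\<tau>}. (Z has_vector_derivative (H t ** Y t)) (at t within {0..\<tau>})"
    and Y0: "Y 0 = 0" and Z0: "Z 0 = mat 1"
    and P: "\<And>v v'. Dv v v' \<Longrightarrow> continuous_on {0..\<tau>} v' \<Longrightarrow> v 0 = 0 \<Longrightarrow> v \<tau> = 0 \<Longrightarrow>
              (\<exists>t\<in>{0..\<tau>}. v t \<noteq> 0) \<Longrightarrow> Qi 0 \<tau> v v' > 0"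
  shows "\<forall>t\<in>{0<..\<tau>}. det (Y t) \<noteq> 0"
proof (rule ccontr)
  assume "\<not> (\<forall>t\<in>{0<..\<tau>}. det (Y t) \<noteq> 0)"
  then obtain c where c: "c \<in> {0<..\<tau>}" "det (Y c) = 0" by blast
  obtain k where k: "Y c *v k = 0" "k \<noteq> 0" using det_nz_of_inj c(2) by blast
  define u where "u t = Y t *v k" for t
  define uz where "uz t = Z t *v k" for t
  have ju: "jacf u uz" unfolding u_def[abs_def] uz_def[abs_def] by (rule jac_col[OF Y Z])
  have Du: "Dv u uz" and cuz: "continuous_on {0..\<tau>} uz" and cu: "continuous_on {0..\<tau>} u"
    using ju jac_cont by (auto simp: jacf_def)
  have u0: "u 0 = 0" and uz0: "uz 0 = k" and uc: "u c = 0" using Y0 Z0 k by (simp_all add: u_def uz_def)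
  have c0: "0 < c" "c \<le> \<tau>" using c by auto
  have Qu: "Qi 0 c u uz = 0" using Qi_jac[OF ju] c0 u0 uc by simp
  have nz: "\<exists>t\<in>{0..c}. u t \<noteq> 0" using nonzero_jac[OF Du u0 _ c0] uz0 k by simp
  consider (eq) "c = \<tau>" | (z) "c < \<tau>" "uz c = 0" | (nzc) "c < \<tau>" "uz c \<noteq> 0" using c0 by linarith
  then show False
  proof cases
    case eq
    have "Qi 0 \<tau> u uz > 0" using P[OF Du cuz u0] uc nz eq by auto
    then show False using Qu eq by simp
  next
    case z
    define v where "v t = (if t \<le> c then u t else 0)" for t
    define v' where "v' t = (if t \<le> c then uz t else 0)" for t
    have Dv: "Dv v v'"
      unfolding Dv_def
    proof
      fix x assume x: "x \<in> {0..\<tau>}"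
      have "((\<lambda>y. if y \<le> c then u y else (\<lambda>_. 0) y) has_vector_derivative (if x \<le> c then uz x else 0)) (at x within {0..\<tau>})"
        by (rule glue2[OF _ z(1) x]) (use c0 Dv_sub[OF Du] uc z in auto)
      then show "(v has_vector_derivative v' x) (at x within {0..\<tau>})"
        by (simp add: v_def[abs_def] v'_def)
    qed
    have cv': "continuous_on {0..\<tau>} v'"
    proof -
      have "continuous_on ({0..c} \<union> {c..\<tau>}) (\<lambda>t. if t \<le> c then uz t else 0)"
        by (rule continuous_on_cases) (use z c0 continuous_on_subset[OF cuz] in auto)
      moreover have "{0..c} \<union> {c..\<tau>} = {0..\<tau>}" using c0 by auto
      ultimately show ?thesis by (simp add: v'_def[abs_def])
    qed
    have v0: "v 0 = 0" and vt: "v \<tau> = 0" using u0 c0 z by (auto simp: v_def)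
    have vnz: "\<exists>t\<in>{0..\<tau>}. v t \<noteq> 0" using nz c0 by (auto simp: v_def)
    have int: "(\<lambda>t. (norm (v' t))\<^sup>2 + v t \<bullet> (H t *v v t)) integrable_on {0..\<tau>}"
      by (intro integrable_continuous_interval integrand_cont Dv_cont[OF Dv] cv') auto
    have "Qi 0 \<tau> v v' = Qi 0 c v v' + Qi c \<tau> v v'"
      unfolding Qi_def using Henstock_Kurzweil_Integration.integral_combine[OF _ _ int, of c] c0 by simp
    also have "Qi 0 c v v' = Qi 0 c u uz" unfolding Qi_def by (rule integral_cong) (simp add: v_def v'_def)
    also have "Qi c \<tau> v v' = integral {c..\<tau>} (\<lambda>t. 0::real)" unfolding Qi_def
      by (rule integral_cong) (use uc z in \<open>auto simp: v_def v'_def\<close>)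
    finally have "Qi 0 \<tau> v v' = 0" using Qu by simp
    then show False using P[OF Dv cv' v0 vt vnz] by simp
  next
    case nzc
    obtain v v' where vv: "Dv v v'" "continuous_on {0..\<tau>} v'" "v 0 = 0" "v \<tau> = 0"
      "\<exists>t\<in>{0..\<tau>}. v t \<noteq> 0" "Qi 0 \<tau> v v' < 0"
      using nec3[OF ju u0 uc c0(1) nzc(1) nzc(2)] by blast
    from P[OF vv(1-5)] vv(6) show False by simp
  qed
qed

end


lemma mv_neg: "(- A) *v x = - (A *v (x::real^'n))"
  for A :: "real^'n^'m"
  by (simp add: matrix_vector_mult_def vec_eq_iff sum_negf)

lemma tr_inner: "x \<bullet> (transpose A *v y) = (A *v x) \<bullet> (y::real^'n)" for A :: "real^'n^'n"
  by (metis dot_lmul_matrix inner_commute transpose_matrix_vector)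

lemma sA_cont:
  assumes "\<And>x. x \<in> S \<Longrightarrow> A *v x \<noteq> 0"
  shows "continuous_on S (sA A i j)"
proof -
  have n: "\<forall>x\<in>S. norm (A *v x) ^ n \<noteq> 0" for n using assms by simp
  have l: "continuous_on S (\<lambda>x. A *v x)" by (intro continuous_intros)
  show ?thesis unfolding sA_def[abs_def]
    by (intro continuous_on_add continuous_on_divide continuous_on_mult continuous_on_const
        continuous_on_inner continuous_on_power continuous_on_norm l n continuous_on_minus)
qed

lemma vstar_inner: "b \<bullet> (z v* A) = z \<bullet> (A *v (b::real^'n))" for A :: "real^'n^'n"
  by (metis dot_lmul_matrix inner_commute)

lemma Kmat_cont: assumes "finite G" shows "continuous_on (Omega G) (Kmat G Q)"
proof -
  have c: "continuous_on (Omega G) (\<lambda>x. - (1/2) * (\<Sum>R \<in> G - {mat 1}. sA (R - mat 1) i j x) + Q * sA (mat 1) i j x)" for i j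
  proof (intro continuous_on_add continuous_on_mult continuous_on_const continuous_on_sum)
    show "continuous_on (Omega G) (sA (R - mat 1) i j)" if "R \<in> G - {mat 1}" for R
      by (rule sA_cont) (use that in \<open>simp add: Omega_def\<close>)
    show "continuous_on (Omega G) (sA (mat 1) i j)"
      by (rule sA_cont) (simp add: Omega_def)
  qed
  show ?thesis unfolding Kmat_def
    by (intro continuous_on_vec_lambda c)
qed

lemma Omega_of_dom:
  assumes "\<exists>R\<in>G. R \<noteq> mat 1" "x \<in> UNIV - rot_axes G"
  shows "x \<in> Omega G"
proof -
  obtain R where R: "R \<in> G" "R \<noteq> mat 1" using assms(1) by blast
  have "x \<noteq> 0"
  proof
    assume "x = 0"
    then have "R *v x = x" by simp
    then have "x \<in> rot_axes G" using R unfolding rot_axes_def by blast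
    then show False using assms(2) by simp
  qed
  moreover have "(R - mat 1) *v x \<noteq> 0" if "R \<in> G - {mat 1}" for R
  proof
    assume "(R - mat 1) *v x = 0"
    then have "R *v x = x" by (simp add: matrix_vector_mult_diff_rdistrib)
    then have "x \<in> rot_axes G" using that unfolding rot_axes_def by blast
    then show False using assms(2) by simp
  qed
  ultimately show ?thesis by (simp add: Omega_def)
qed

lemma H_props:
  assumes G: "finite G" "\<exists>R\<in>G. R \<noteq> mat 1"
    and dom: "\<forall>t\<in>{0..\<tau>}. u0 t \<in> UNIV - rot_axes G"
    and cu0: "continuous_on {0..\<tau>} u0"
    and H: "\<forall>t. H t = hessian (potential G Q) (u0 t)"
  shows "continuous_on {0..\<tau>} H" "\<And>t. t \<in> {0..\<tau>} \<Longrightarrow> transpose (H t) = H t"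
proof -
  have om: "u0 t \<in> Omega G" if "t \<in> {0..\<tau>}" for t using Omega_of_dom[OF G(2)] dom that by blast
  have Hk: "H t = Kmat G Q (u0 t)" if "t \<in> {0..\<tau>}" for t
  proof -
    have "H t = hessian (potential G Q) (u0 t)" using H by blast
    also have "\<dots> = Kmat G Q (u0 t)" by (rule hessian_pot[OF G(1) om[OF that]])
    finally show ?thesis .
  qed
  have "continuous_on {0..\<tau>} (\<lambda>t. Kmat G Q (u0 t))"
    by (rule continuous_on_compose2[OF Kmat_cont[OF G(1)] cu0]) (use om in auto)
  then show "continuous_on {0..\<tau>} H" by (rule continuous_on_eq) (use Hk in auto)
  show "transpose (H t) = H t" if "t \<in> {0..\<tau>}" for t unfolding Hk[OF that] by (rule Kmat_sym)
qed

theorem mainTheorem1: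
  fixes N :: nat and G :: "(real^3^3) set" and Q T \<tau> :: real and M :: nat
    and R0 :: "real^3^3"
    and u0 u1 u2 :: "real \<Rightarrow> real^3"
    and H :: "real \<Rightarrow> real^3^3"
    and Y0 Z0 Y\<tau> Z\<tau> :: "real \<Rightarrow> real^3^3"
  assumes N: "N \<in> {12, 24, 60}"
    and G: "platonic_rotation_group G" "card G = N"
    and Q: "Q > 0"
    and T: "T > 0" and M: "M \<ge> 1" and tau: "\<tau> = T / real M"
    and R0: "R0 \<in> SO3"
    and u0_dom: "\<forall>t \<in> {0..\<tau>}. u0 t \<in> UNIV - rot_axes G"
    and u0_d1: "\<forall>t \<in> {0..\<tau>}. (u0 has_vector_derivative u1 t) (at t within {0..\<tau>})"
    and u0_d2: "\<forall>t \<in> {0..\<tau>}. (u1 has_vector_derivative u2 t) (at t within {0..\<tau>})"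
    and u0_C2: "continuous_on {0..\<tau>} u2"
    and EL: "\<forall>t \<in> {0..\<tau>}. u2 t = grad (potential G Q) (u0 t)"
    and H: "\<forall>t. H t = hessian (potential G Q) (u0 t)"
    and Y0: "\<forall>t \<in> {0..\<tau>}. (Y0 has_vector_derivative Z0 t) (at t within {0..\<tau>})"
    and Z0: "\<forall>t \<in> {0..\<tau>}. (Z0 has_vector_derivative (H t ** Y0 t)) (at t within {0..\<tau>})"
    and Y0_init: "Y0 0 = 0" and Z0_init: "Z0 0 = mat 1"
    and Y\<tau>: "\<forall>t \<in> {0..\<tau>}. (Y\<tau> has_vector_derivative Z\<tau> t) (at t within {0..\<tau>})"
    and Z\<tau>: "\<forall>t \<in> {0..\<tau>}. (Z\<tau> has_vector_derivative (H t ** Y\<tau> t)) (at t within {0..\<tau>})"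
    and Y\<tau>_fin: "Y\<tau> \<tau> = 0" and Z\<tau>_fin: "Z\<tau> \<tau> = - mat 1"
  shows "(\<forall>v v' :: real \<Rightarrow> real^3.
            (\<forall>t \<in> {0..\<tau>}. (v has_vector_derivative v' t) (at t within {0..\<tau>}))
            \<and> continuous_on {0..\<tau>} v'
            \<and> v \<tau> = R0 *v v 0
            \<and> (\<exists>t \<in> {0..\<tau>}. v t \<noteq> 0)
            \<longrightarrow> integral {0..\<tau>} (\<lambda>t. (norm (v' t))\<^sup>2 + v t \<bullet> (H t *v v t)) > 0)
         \<longleftrightarrow>
         ((\<forall>t \<in> {0<..\<tau>}. det (Y0 t) \<noteq> 0) \<and>
          pos_def (- (Z\<tau> 0 ** matrix_inv (Y\<tau> 0))
                   - matrix_inv (Y0 \<tau>) ** R0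
                   - transpose R0 ** transpose (matrix_inv (Y0 \<tau>))
                   + transpose R0 ** (Z0 \<tau> ** matrix_inv (Y0 \<tau>)) ** R0))"
proof -
  have tau0: "\<tau> > 0" using T M tau by simp
  have cardG: "card G \<ge> 12" using G(2) N by auto
  then have finG: "finite G" using card.infinite by fastforce
  have ntriv: "\<exists>R\<in>G. R \<noteq> mat 1"
  proof (rule ccontr)
    assume "\<not> ?thesis"
    then have "G \<subseteq> {mat 1}" by auto
    then have "card G \<le> 1" using card_mono[of "{mat 1}" G] by simp
    then show False using cardG by simp
  qed
  have cu0: "continuous_on {0..\<tau>} u0"
    unfolding continuous_on_eq_continuous_within using u0_d1 has_vector_derivative_continuous by blast
  note HP = H_props[OF finG ntriv u0_dom cu0 H]
  interpret J: jsetup \<tau> H by unfold_locales (use tau0 HP in auto)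
  have jY: "J.jacf (\<lambda>t. Y0 t *v x) (\<lambda>t. Z0 t *v x)" for x by (rule J.jac_col[OF Y0 Z0])
  have jYt: "J.jacf (\<lambda>t. Y\<tau> t *v x) (\<lambda>t. Z\<tau> t *v x)" for x by (rule J.jac_col[OF Y\<tau> Z\<tau>])
  have t0: "(0::real) \<in> {0..\<tau>}" "\<tau> \<in> {0..\<tau>}" using tau0 by auto
  have YtT: "Y\<tau> 0 = transpose (Y0 \<tau>)"
  proof -
    have "Y\<tau> 0 *v y = transpose (Y0 \<tau>) *v y" for y
    proof -
      have "x \<bullet> (Y\<tau> 0 *v y) = x \<bullet> (transpose (Y0 \<tau>) *v y)" for x
      proof -
        have w: "(Y0 \<tau> *v x) \<bullet> y = x \<bullet> (Y\<tau> 0 *v y)"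
          using J.wronsk[OF jY[of x] jYt[of y] t0(2)] Y0_init Z0_init Y\<tau>_fin Z\<tau>_fin
          by (simp add: mv_neg)
        show ?thesis using tr_inner[of x "Y0 \<tau>" y] w by metis
      qed
      then show ?thesis using vector_eq_ldot by blast
    qed
    then show ?thesis by (simp add: matrix_eq)
  qed
  define M where "M = - (Z\<tau> 0 ** matrix_inv (Y\<tau> 0))
                   - matrix_inv (Y0 \<tau>) ** R0
                   - transpose R0 ** transpose (matrix_inv (Y0 \<tau>))
                   + transpose R0 ** (Z0 \<tau> ** matrix_inv (Y0 \<tau>)) ** R0"
  define cv where "cv b = matrix_inv (Y0 \<tau>) *v (R0 *v b)" for b
  define dv where "dv b = matrix_inv (Y\<tau> 0) *v b" for b
  define j where "j b t = Y0 t *v cv b + Y\<tau> t *v dv b" for b t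
  define jz where "jz b t = Z0 t *v cv b + Z\<tau> t *v dv b" for b t
  have jj: "J.jacf (j b) (jz b)" for b
    unfolding j_def[abs_def] jz_def[abs_def] by (rule J.jac_add[OF jY jYt])
  have Dj: "J.Dv (j b) (jz b)" and cjz: "continuous_on {0..\<tau>} (jz b)" for b
    using jj[of b] J.jac_cont[OF jj[of b]] by (auto simp: J.jacf_def)
  have quad: "J.Qi 0 \<tau> (j b) (jz b) = b \<bullet> (M *v b)" and jb: "j b 0 = b" "j b \<tau> = R0 *v b"
    if dY: "det (Y0 \<tau>) \<noteq> 0" for b
  proof -
    have dYt: "det (Y\<tau> 0) \<noteq> 0" using dY YtT by simp
    have dvT: "dv b = transpose (matrix_inv (Y0 \<tau>)) *v b"
      using minv_transpose[OF dY] YtT by (simp add: dv_def)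
    then have dvT': "b v* matrix_inv (Y0 \<tau>) = dv b" by simp
    show j0: "j b 0 = b" using Y0_init by (simp add: j_def dv_def minv_mv[OF dYt])
    show jt: "j b \<tau> = R0 *v b" using Y\<tau>_fin by (simp add: j_def cv_def minv_mv[OF dY])
    have "J.Qi 0 \<tau> (j b) (jz b) = jz b \<tau> \<bullet> j b \<tau> - jz b 0 \<bullet> j b 0"
      using J.Qi_jac[OF jj] tau0 by simp
    also have "\<dots> = (Z0 \<tau> *v cv b - dv b) \<bullet> (R0 *v b) - (cv b + Z\<tau> 0 *v dv b) \<bullet> b"
      using j0 jt Z0_init Z\<tau>_fin by (simp add: jz_def mv_neg)
    also have "\<dots> = b \<bullet> (M *v b)"
    proof -
      have Mb: "M *v b = - (Z\<tau> 0 *v dv b) - cv b - transpose R0 *v dv b + transpose R0 *v (Z0 \<tau> *v cv b)"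
        unfolding M_def
        by (simp only: matrix_vector_mult_add_rdistrib matrix_vector_mult_diff_rdistrib mv_neg
            matrix_vector_mul_assoc[symmetric] cv_def[symmetric] dv_def[symmetric] dvT[symmetric])
      have "b \<bullet> (M *v b) = - (b \<bullet> (Z\<tau> 0 *v dv b)) - b \<bullet> cv b - b \<bullet> (transpose R0 *v dv b) + b \<bullet> (transpose R0 *v (Z0 \<tau> *v cv b))"
        unfolding Mb by (simp only: inner_diff_right inner_add_right inner_minus_right)
      also have "\<dots> = - (b \<bullet> (Z\<tau> 0 *v dv b)) - b \<bullet> cv b - (R0 *v b) \<bullet> dv b + (R0 *v b) \<bullet> (Z0 \<tau> *v cv b)"
        by (simp only: tr_inner)
      finally show ?thesis
        apply (simp add: inner_diff_left inner_add_left inner_commute[of "Z0 \<tau> *v cv b" "R0 *v b"]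
            inner_commute[of "cv b" b] inner_commute[of "Z\<tau> 0 *v dv b" b])
        by (rule inner_commute)
    qed
    finally show "J.Qi 0 \<tau> (j b) (jz b) = b \<bullet> (M *v b)" .
  qed
  have Qeq: "integral {0..\<tau>} (\<lambda>t. (norm (v' t))\<^sup>2 + v t \<bullet> (H t *v v t)) = J.Qi 0 \<tau> v v'" for v v'
    by (simp add: J.Qi_def)
  show ?thesis
    unfolding Qeq M_def[symmetric]
  proof
    assume L: "\<forall>v v' :: real \<Rightarrow> real^3.
            (\<forall>t \<in> {0..\<tau>}. (v has_vector_derivative v' t) (at t within {0..\<tau>}))
            \<and> continuous_on {0..\<tau>} v'
            \<and> v \<tau> = R0 *v v 0
            \<and> (\<exists>t \<in> {0..\<tau>}. v t \<noteq> 0)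
            \<longrightarrow> J.Qi 0 \<tau> v v' > 0"
    have P: "J.Qi 0 \<tau> v v' > 0" if "J.Dv v v'" "continuous_on {0..\<tau>} v'" "v 0 = 0" "v \<tau> = 0"
      "\<exists>t\<in>{0..\<tau>}. v t \<noteq> 0" for v v'
    proof -
      have "(\<forall>t \<in> {0..\<tau>}. (v has_vector_derivative v' t) (at t within {0..\<tau>}))
            \<and> continuous_on {0..\<tau>} v' \<and> v \<tau> = R0 *v v 0 \<and> (\<exists>t \<in> {0..\<tau>}. v t \<noteq> 0)"
        using that unfolding J.Dv_def by simp
      then show ?thesis using L by blast
    qed
    have i: "\<forall>t\<in>{0<..\<tau>}. det (Y0 t) \<noteq> 0" by (rule J.nec[OF Y0 Z0 Y0_init Z0_init P])
    then have dY: "det (Y0 \<tau>) \<noteq> 0" using tau0 by auto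
    have "pos_def M"
      unfolding pos_def_def
    proof (intro allI impI)
      fix b :: "real^3" assume b: "b \<noteq> 0"
      have "(\<forall>t \<in> {0..\<tau>}. (j b has_vector_derivative jz b t) (at t within {0..\<tau>}))
            \<and> continuous_on {0..\<tau>} (jz b) \<and> j b \<tau> = R0 *v j b 0 \<and> (\<exists>t \<in> {0..\<tau>}. j b t \<noteq> 0)"
      proof (intro conjI)
        show "\<forall>t \<in> {0..\<tau>}. (j b has_vector_derivative jz b t) (at t within {0..\<tau>})"
          using Dj[of b] unfolding J.Dv_def .
        show "continuous_on {0..\<tau>} (jz b)" by (rule cjz)
        show "j b \<tau> = R0 *v j b 0" using jb[OF dY, of b] by simp
        show "\<exists>t \<in> {0..\<tau>}. j b t \<noteq> 0" using jb[OF dY, of b] b t0 by (intro bexI[of _ 0]) auto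
      qed
      then have "J.Qi 0 \<tau> (j b) (jz b) > 0" using L by blast
      then show "b \<bullet> (M *v b) > 0" using quad[OF dY] by simp
    qed
    with i show "(\<forall>t\<in>{0<..\<tau>}. det (Y0 t) \<noteq> 0) \<and> pos_def M" by blast
  next
    assume R: "(\<forall>t\<in>{0<..\<tau>}. det (Y0 t) \<noteq> 0) \<and> pos_def M"
    then have dY: "det (Y0 \<tau>) \<noteq> 0" using tau0 by auto
    show "\<forall>v v' :: real \<Rightarrow> real^3.
            (\<forall>t \<in> {0..\<tau>}. (v has_vector_derivative v' t) (at t within {0..\<tau>}))
            \<and> continuous_on {0..\<tau>} v'
            \<and> v \<tau> = R0 *v v 0
            \<and> (\<exists>t \<in> {0..\<tau>}. v t \<noteq> 0)
            \<longrightarrow> J.Qi 0 \<tau> v v' > 0"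
    proof (intro allI impI)
      fix v v' :: "real \<Rightarrow> real^3"
      assume a: "(\<forall>t \<in> {0..\<tau>}. (v has_vector_derivative v' t) (at t within {0..\<tau>}))
            \<and> continuous_on {0..\<tau>} v'
            \<and> v \<tau> = R0 *v v 0
            \<and> (\<exists>t \<in> {0..\<tau>}. v t \<noteq> 0)"
      define b where "b = v 0"
      define w where "w t = v t - j b t" for t
      define w' where "w' t = v' t - jz b t" for t
      have Dv: "J.Dv v v'" using a by (simp add: J.Dv_def)
      have Dw: "J.Dv w w'" using Dv Dj[of b] unfolding J.Dv_def w_def[abs_def] w'_def
        by (auto intro: has_vector_derivative_diff)
      have cw': "continuous_on {0..\<tau>} w'" unfolding w'_def[abs_def]
        using a cjz[of b] by (intro continuous_intros) auto
      have w0: "w 0 = 0" using jb[OF dY] by (simp add: w_def b_def)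
      have wt: "w \<tau> = 0" using jb[OF dY] a by (simp add: w_def b_def)
      have fp: "J.Qi 0 \<tau> w w' \<ge> 0 \<and> (J.Qi 0 \<tau> w w' = 0 \<longrightarrow> (\<forall>t\<in>{0..\<tau>}. w t = 0))"
        by (rule J.fixed_pos[OF Y0 Z0 Y0_init Z0_init _ Dw cw' w0 wt]) (use R in auto)
      have "J.Qi 0 \<tau> v v' = J.Qi 0 \<tau> (\<lambda>t. j b t + w t) (\<lambda>t. jz b t + w' t)"
        by (simp add: w_def w'_def)
      also have "\<dots> = J.Qi 0 \<tau> (j b) (jz b) + 2 * (jz b \<tau> \<bullet> w \<tau> - jz b 0 \<bullet> w 0) + J.Qi 0 \<tau> w w'"
        using tau0 by (intro J.Qi_split[OF jj Dw cw']) auto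
      also have "\<dots> = b \<bullet> (M *v b) + J.Qi 0 \<tau> w w'" using quad[OF dY] w0 wt by simp
      finally have Qv: "J.Qi 0 \<tau> v v' = b \<bullet> (M *v b) + J.Qi 0 \<tau> w w'" .
      show "J.Qi 0 \<tau> v v' > 0"
      proof (cases "b = 0")
        case False
        then have "b \<bullet> (M *v b) > 0" using R by (simp add: pos_def_def)
        then show ?thesis using Qv fp by simp
      next
        case True
        have j0: "j b t = 0" for t using True by (simp add: j_def cv_def dv_def)
        have "J.Qi 0 \<tau> w w' \<noteq> 0"
        proof
          assume "J.Qi 0 \<tau> w w' = 0"
          then have "\<forall>t\<in>{0..\<tau>}. w t = 0" using fp by blast
          then have "\<forall>t\<in>{0..\<tau>}. v t = 0" using j0 by (simp add: w_def)
          then show False using a by blast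
        qed
        then show ?thesis using Qv fp True by simp
      qed
    qed
  qed
qed


end
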